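(* Let $l\ge1$ be an integer and $(a_0,\dots,a_{l-1})\in\mathbb{R}^l$, and set $a_l:=1$. Consider the planar system given in polar coordinates $(\rho,\varphi)$ by $$\dot\rho=-\rho\left(\rho^{-2l}+\sum_{j=0}^{l-1}a_j\rho^{-2j}\right),\qquad\dot\varphi=1,$$ and let $\Gamma$ be a part of a trajectory of this system near infinity (an unbounded spiral piece lying at positive distance from the origin). (a) If $a_0\neq0$, then $\Gamma$ is of exponential type, namely comparable with the spiral $\rho=e^{-a_0\varphi}$, and $\dim_B\Gamma=1$. (b) If $1\le k\le l$ is fixed and $a_0=\dots=a_{k-1}=0$, $a_k\neq0$, then $\Gamma$ is comparable with the spiral $\rho=|\varphi|^{1/(2k)}$, and $$\dim_B\Gamma=\frac{4k}{2k+1}.$$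
   Context: This system is obtained from the Hopf–Takens normal form $\dot r=r(r^{2l}+\sum_{j=0}^{l-1}a_jr^{2j})$, $\dot\varphi=1$ by $\rho=1/r$. A spiral $\rho=F(\varphi)$ is comparable with $\rho=G(\varphi)$ if there are constants $c_1,c_2>0$ with $c_1G(\varphi)\le F(\varphi)\le c_2G(\varphi)$ for all $\varphi$ in the end of the range of angles along which the spiral tends to infinity. For a nonempty bounded $B\subset\mathbb{R}^2$, with $B_\varepsilon$ its $\varepsilon$-neighbourhood and $|B_\varepsilon|$ its area, $\overline{\dim}_BB=\inf\{s:\limsup_{\varepsilon\to0}|B_\varepsilon|/\varepsilon^{2-s}=0\}$, $\underline{\dim}_BB$ the same with $\liminf$, $\dim_BB$ their common value; for an unbounded $A\subset\mathbb{R}^2$ with $0\notin\overline A$, $\dim_BA:=\dim_B\Phi(A)$, $\Phi(x)=x/|x|^2$. *)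

theory Defs
  imports "HOL-Analysis.Analysis"
begin

definition eps_nbhd :: "complex set \<Rightarrow> real \<Rightarrow> complex set" where
  "eps_nbhd B \<epsilon> = (\<Union>x\<in>B. ball x \<epsilon>)"

definition upper_box_dim :: "complex set \<Rightarrow> real" where
  "upper_box_dim B = Inf {s::real. Limsup (at_right 0)
      (\<lambda>\<epsilon>. ereal (measure lebesgue (eps_nbhd B \<epsilon>) / \<epsilon> powr (2 - s))) = 0}"

definition lower_box_dim :: "complex set \<Rightarrow> real" where
  "lower_box_dim B = Inf {s::real. Liminf (at_right 0)
      (\<lambda>\<epsilon>. ereal (measure lebesgue (eps_nbhd B \<epsilon>) / \<epsilon> powr (2 - s))) = 0}"

text \<open>Inversion Phi(x) = x / |x|^2, used to define the box dimension of unbounded sets.\<close>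
definition inversion :: "complex \<Rightarrow> complex" where
  "inversion z = z / complex_of_real ((cmod z)\<^sup>2)"

definition comparable :: "(real \<Rightarrow> real) \<Rightarrow> (real \<Rightarrow> real) \<Rightarrow> real filter \<Rightarrow> bool" where
  "comparable F G L \<longleftrightarrow> (\<exists>c1 c2. c1 > 0 \<and> c2 > 0 \<and>
      (\<forall>\<^sub>F \<phi> in L. c1 * G \<phi> \<le> F \<phi> \<and> F \<phi> \<le> c2 * G \<phi>))"

end

theory Submission
  imports Defs "HOL-Real_Asymp.Real_Asymp"
begin

lemma box_dims:
  fixes B :: "complex set" and d :: real
  assumes up: "\<And>s. s > d \<Longrightarrow> ((\<lambda>e. measure lebesgue (eps_nbhd B e) / e powr (2 - s)) \<longlongrightarrow> 0) (at_right 0)"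
    and low: "\<And>s. s < d \<Longrightarrow> filterlim (\<lambda>e. measure lebesgue (eps_nbhd B e) / e powr (2 - s)) at_top (at_right 0)"
  shows "lower_box_dim B = d \<and> upper_box_dim B = d"
proof -
  define f where "f s e = ereal (measure lebesgue (eps_nbhd B e) / e powr (2 - s))" for s e
  have lsup: "Limsup (at_right 0) (f s) = 0" "Liminf (at_right 0) (f s) = 0" if "s > d" for s
  proof -
    have "(f s \<longlongrightarrow> ereal 0) (at_right 0)" unfolding f_def using up[OF that] by (intro tendsto_ereal)
    then show "Limsup (at_right 0) (f s) = 0" "Liminf (at_right 0) (f s) = 0"
      using lim_imp_Limsup[OF trivial_limit_at_right_real] lim_imp_Liminf[OF trivial_limit_at_right_real] by (auto simp: zero_ereal_def)
  qed
  have linf: "Liminf (at_right 0) (f s) = \<infinity>" "Limsup (at_right 0) (f s) = \<infinity>" if "s < d" for s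
  proof -
    have "(f s \<longlongrightarrow> \<infinity>) (at_right 0)" unfolding f_def using low[OF that] by (subst tendsto_PInfty_eq_at_top)
    then show "Liminf (at_right 0) (f s) = \<infinity>" "Limsup (at_right 0) (f s) = \<infinity>"
      using lim_imp_Limsup[OF trivial_limit_at_right_real] lim_imp_Liminf[OF trivial_limit_at_right_real] by auto
  qed
  have key: "Inf S = d" if S1: "\<And>s. s > d \<Longrightarrow> s \<in> S" and S2: "\<And>s. s < d \<Longrightarrow> s \<notin> S" for S :: "real set"
  proof -
    have ne: "S \<noteq> {}" using S1[of "d+1"] by auto
    have bdd: "bdd_below S" unfolding bdd_below_def using S2 by (meson not_le)
    have "d \<le> Inf S" using ne S2 by (intro cInf_greatest) (auto simp: not_less[symmetric])
    moreover have "Inf S \<le> d"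
    proof (rule field_le_epsilon)
      fix e :: real assume "e > 0"
      then show "Inf S \<le> d + e" using cInf_lower[OF S1[of "d+e"] bdd] \<open>e>0\<close> by auto
    qed
    ultimately show ?thesis by auto
  qed
  show ?thesis unfolding lower_box_dim_def upper_box_dim_def
    using key[of "{s. Liminf (at_right 0) (f s) = 0}"] key[of "{s. Limsup (at_right 0) (f s) = 0}"]
      lsup linf unfolding f_def by auto
qed

lemma measure_ball_complex: "r \<ge> 0 \<Longrightarrow> measure lebesgue (ball (c::complex) r) = pi * r^2"
proof -
  assume "r \<ge> 0"
  have "measure lebesgue (ball c r) = measure lborel (ball c r)"
    by (simp add: measure_completion)
  also have "\<dots> = unit_ball_vol (DIM(complex)) * r ^ DIM(complex)" using \<open>r \<ge> 0\<close> by (rule content_ball)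
  also have "unit_ball_vol (DIM(complex)) = pi"
    using unit_ball_vol_even[of 1] by simp
  finally show ?thesis by simp
qed

lemma content_ball_complex: "r \<ge> 0 \<Longrightarrow> measure lborel (ball (c::complex) r) = pi * r^2"
  using measure_ball_complex[of r c] by (simp add: measure_completion)

lemma eps_nbhd_open: "open (eps_nbhd B e)"
  unfolding eps_nbhd_def by auto

lemma eps_nbhd_sets: "eps_nbhd B e \<in> sets lebesgue"
  by (simp add: eps_nbhd_open borel_open)

lemma eps_nbhd_bounded: "bounded B \<Longrightarrow> bounded (eps_nbhd B e)"
proof -
  assume "bounded B"
  then obtain M where M: "\<And>x. x \<in> B \<Longrightarrow> norm x \<le> M" by (auto simp: bounded_iff)
  show ?thesis unfolding bounded_iff eps_nbhd_def
    by (rule exI[of _ "M + \<bar>e\<bar>"]) (auto dest!: M simp: dist_norm intro: norm_triangle_le_diff[THEN order_trans] 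
       , smt (verit, best) norm_minus_commute norm_triangle_ineq2)
qed

lemma eps_nbhd_lmeasurable: "bounded B \<Longrightarrow> eps_nbhd B e \<in> lmeasurable"
  by (simp add: bounded_set_imp_lmeasurable eps_nbhd_bounded eps_nbhd_sets)

lemma eps_nbhd_mono: "A \<subseteq> B \<Longrightarrow> eps_nbhd A e \<subseteq> eps_nbhd B e"
  unfolding eps_nbhd_def by auto

lemma eps_nbhd_Un: "eps_nbhd (A \<union> B) e = eps_nbhd A e \<union> eps_nbhd B e"
  unfolding eps_nbhd_def by auto

lemma eps_nbhd_cball0: "e > 0 \<Longrightarrow> eps_nbhd (cball 0 m) e \<subseteq> ball 0 (max 0 m + e)"
  unfolding eps_nbhd_def by (auto simp: dist_norm) (smt (verit) norm_minus_commute norm_triangle_ineq2)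

lemma measure_mono_lebesgue:
  assumes "A \<subseteq> B" "B \<in> lmeasurable" "A \<in> sets lebesgue"
  shows "measure lebesgue A \<le> measure lebesgue B"
  using assms by (intro measure_mono_fmeasurable) auto

lemma cover_lip:
  fixes f :: "real \<Rightarrow> complex"
  assumes ab: "a \<le> b" and L: "L > 0" and e: "e > 0"
    and lip: "\<And>x y. x \<in> {a..b} \<Longrightarrow> y \<in> {a..b} \<Longrightarrow> dist (f x) (f y) \<le> L * \<bar>x - y\<bar>"
  shows "measure lebesgue (eps_nbhd (f ` {a..b}) e) \<le> (L * (b - a) / e + 2) * (4 * pi * e^2)"
proof -
  define h where "h = e / L"
  have h: "h > 0" using e L by (simp add: h_def)
  define n where "n = nat \<lceil>(b - a) / h\<rceil>"
  define c where "c j = f (min b (a + real j * h))" for j :: nat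
  have sub: "eps_nbhd (f ` {a..b}) e \<subseteq> (\<Union>j\<in>{..n}. ball (c j) (2 * e))"
  proof
    fix z assume "z \<in> eps_nbhd (f ` {a..b}) e"
    then obtain x where x: "x \<in> {a..b}" "dist (f x) z < e" unfolding eps_nbhd_def by auto
    define j where "j = nat \<lfloor>(x - a) / h\<rfloor>"
    define q where "q = (x - a) / h"
    have q0: "q \<ge> 0" using x h by (simp add: q_def)
    have qh: "q * h = x - a" using h by (simp add: q_def)
    have fl: "real j = of_int \<lfloor>q\<rfloor>" using q0 unfolding j_def q_def by simp
    have "real j \<le> q" using fl by linarith
    then have j1: "real j * h \<le> x - a" using h qh by (metis mult_right_mono less_imp_le)
    have "q < real j + 1" using fl by linarith
    then have "q * h < (real j + 1) * h" using h by (intro mult_strict_right_mono) auto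
    then have j2: "x - a < real j * h + h" using qh by (simp add: algebra_simps)
    have "q \<le> (b - a) / h" using x h unfolding q_def by (intro divide_right_mono) auto
    then have jn: "j \<le> n" unfolding j_def n_def q_def[symmetric]
      by (intro nat_mono) (meson ceiling_mono floor_le_ceiling order_trans)
    have m: "min b (a + real j * h) = a + real j * h" using j1 x by auto
    have "dist (f x) (c j) \<le> L * \<bar>x - (a + real j * h)\<bar>"
      unfolding c_def m using x j1 h by (intro lip) auto
    also have "\<dots> < L * h" using j1 j2 L by (intro mult_strict_left_mono) auto
    also have "L * h = e" using L by (simp add: h_def)
    finally have "dist (c j) z < 2 * e" using x(2) by (smt (verit) dist_commute dist_triangle)
    then show "z \<in> (\<Union>j\<in>{..n}. ball (c j) (2 * e))" using jn by auto
  qed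
  have "measure lebesgue (eps_nbhd (f ` {a..b}) e) \<le> measure lebesgue (\<Union>j\<in>{..n}. ball (c j) (2 * e))"
    by (rule measure_mono_lebesgue[OF sub]) (auto simp: eps_nbhd_sets intro!: bounded_set_imp_lmeasurable)
  also have "\<dots> \<le> (\<Sum>j\<in>{..n}. measure lebesgue (ball (c j) (2 * e)))"
    by (rule measure_UNION_le) auto
  also have "\<dots> = real (n + 1) * (4 * pi * e^2)"
    using e by (simp add: measure_ball_complex content_ball_complex power2_eq_square)
  also have "real (n + 1) \<le> L * (b - a) / e + 2"
  proof -
    have q: "(b - a) / h \<ge> 0" using ab h by auto
    have "real n = of_int \<lceil>(b - a) / h\<rceil>" unfolding n_def using q by simp
    then have "real n \<le> (b - a) / h + 1" by linarith
    moreover have "(b - a) / h = L * (b - a) / e" using L e by (simp add: h_def field_simps)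
    ultimately show ?thesis by simp
  qed
  then have "real (n + 1) * (4 * pi * e^2) \<le> (L * (b - a) / e + 2) * (4 * pi * e^2)"
    by (intro mult_right_mono) auto
  finally show ?thesis .
qed

lemma lower_lin:
  fixes B :: "complex set"
  assumes bB: "bounded B" and D: "D > 0" and hit: "\<And>t. 0 < t \<Longrightarrow> t \<le> D \<Longrightarrow> \<exists>z\<in>B. cmod z = t"
    and e: "e > 0" "e \<le> D / 4"
  shows "pi * D * e / 4 \<le> measure lebesgue (eps_nbhd B e)"
proof -
  define N where "N = nat \<lfloor>D / (2 * e)\<rfloor>"
  define z where "z i = (SOME w. w \<in> B \<and> cmod w = 2 * e * real i)" for i :: nat
  have q2: "D / (2 * e) \<ge> 2" using e by (simp add: field_simps)
  have NN: "real N = of_int \<lfloor>D / (2 * e)\<rfloor>" unfolding N_def using q2 by simp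
  have N1: "real N \<ge> D / (2 * e) - 1" "real N \<le> D / (2 * e)" using NN by linarith+
  have zi: "z i \<in> B \<and> cmod (z i) = 2 * e * real i" if "i \<in> {1..N}" for i
  proof -
    have "2 * e * real i \<le> 2 * e * real N" using that e by auto
    also have "\<dots> \<le> D" using N1 e by (simp add: field_simps)
    finally have "\<exists>w\<in>B. cmod w = 2 * e * real i" using that e by (intro hit) auto
    then show ?thesis unfolding z_def by (rule someI2_bex) auto
  qed
  have disj: "pairwise (\<lambda>i j. disjnt (ball (z i) e) (ball (z j) e)) {1..N}"
  proof (rule pairwiseI)
    fix i j assume ij: "i \<in> {1..N}" "j \<in> {1..N}" "i \<noteq> j"
    have "2 * e \<le> 2 * e * \<bar>real i - real j\<bar>" using ij e by auto
    also have "\<dots> = \<bar>cmod (z i) - cmod (z j)\<bar>"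
    proof -
      have "cmod (z i) - cmod (z j) = (2 * e) * (real i - real j)"
        using zi[OF ij(1)] zi[OF ij(2)] by (simp add: algebra_simps)
      then show ?thesis using e by (simp add: abs_mult)
    qed
    also have "\<dots> \<le> dist (z i) (z j)" by (simp add: dist_norm norm_triangle_ineq3)
    finally show "disjnt (ball (z i) e) (ball (z j) e)"
      unfolding disjnt_def by (auto simp: dist_commute) (smt (verit) dist_triangle dist_commute)
  qed
  have "measure lebesgue (\<Union>i\<in>{1..N}. ball (z i) e) = (\<Sum>i\<in>{1..N}. measure lebesgue (ball (z i) e))"
    by (rule measure_UNION'[OF _ _ disj]) (auto intro!: bounded_set_imp_lmeasurable)
  also have "\<dots> = real N * (pi * e^2)" using e by (simp add: measure_ball_complex content_ball_complex)
  finally have eq: "measure lebesgue (\<Union>i\<in>{1..N}. ball (z i) e) = real N * (pi * e^2)" .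
  have sub: "(\<Union>i\<in>{1..N}. ball (z i) e) \<subseteq> eps_nbhd B e"
    unfolding eps_nbhd_def using zi by fastforce
  have "pi * D * e / 4 \<le> real N * (pi * e^2)"
  proof -
    have "D / (4 * e) \<le> real N" using N1 q2 e by (simp add: field_simps)
    then have "D / (4 * e) * (pi * e^2) \<le> real N * (pi * e^2)" by (intro mult_right_mono) auto
    moreover have "D / (4 * e) * (pi * e^2) = pi * D * e / 4" using e by (simp add: field_simps power2_eq_square)
    ultimately show ?thesis by linarith
  qed
  also have "\<dots> \<le> measure lebesgue (eps_nbhd B e)"
    unfolding eq[symmetric] using bB
    by (intro measure_mono_lebesgue[OF sub]) (auto simp: eps_nbhd_lmeasurable)
  finally show ?thesis .
qed

lemma disc_lower:
  fixes r :: "real \<Rightarrow> real"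
  assumes e: "e > 0" and m: "m > 0"
    and gap: "\<And>\<phi>. \<phi> \<ge> T1 \<Longrightarrow> \<bar>r \<phi> - r (\<phi> + 2 * pi)\<bar> < 2 * e"
    and lim: "(r \<longlongrightarrow> 0) at_top"
    and low: "\<And>\<phi>. \<phi> \<in> {T1..T1 + 2 * pi} \<Longrightarrow> m \<le> r \<phi>"
  shows "ball 0 m \<subseteq> eps_nbhd ((\<lambda>\<phi>. complex_of_real (r \<phi>) * cis \<phi>) ` {T1..}) e"
proof
  fix z :: complex assume zb: "z \<in> ball 0 m"
  have ev: "eventually (\<lambda>\<phi>. \<bar>r \<phi>\<bar> < d) at_top" if "d > 0" for d
    using lim that by (auto simp: tendsto_iff dist_real_def)
  have far: "\<exists>\<phi>\<ge>X. \<bar>r \<phi>\<bar> < d" if "d > 0" for d X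
    using ev[OF that] unfolding eventually_at_top_linorder by (metis linorder_le_cases order.trans)
  show "z \<in> eps_nbhd ((\<lambda>\<phi>. complex_of_real (r \<phi>) * cis \<phi>) ` {T1..}) e"
  proof (cases "z = 0")
    case True
    obtain \<phi> where "\<phi> \<ge> T1" "\<bar>r \<phi>\<bar> < e" using far[OF e] by blast
    then show ?thesis unfolding eps_nbhd_def using True by (auto simp: norm_mult)
  next
    case False
    define \<theta>0 where "\<theta>0 = Arg z"
    have zrep: "z = complex_of_real (cmod z) * cis \<theta>0"
      unfolding \<theta>0_def by (metis rcis_cmod_Arg rcis_def)
    define k where "k = \<lceil>(T1 - \<theta>0) / (2 * pi)\<rceil>"
    define \<theta> where "\<theta> = \<theta>0 + 2 * pi * of_int k"
    have k1: "(T1 - \<theta>0) / (2 * pi) \<le> of_int k" "of_int k < (T1 - \<theta>0) / (2 * pi) + 1"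
      unfolding k_def by linarith+
    have th1: "T1 \<le> \<theta>" using k1(1) pi_gt_zero unfolding \<theta>_def by (simp add: field_simps)
    have th2: "\<theta> < T1 + 2 * pi" using k1(2) pi_gt_zero unfolding \<theta>_def by (simp add: field_simps)
    have cisth: "cis (\<theta> + 2 * pi * real n) = cis \<theta>0" for n :: nat
    proof -
      have "cis (\<theta> + 2 * pi * real n) = cis \<theta>0 * cis (2 * pi * (of_int k + real n))"
        unfolding \<theta>_def by (simp add: cis_mult algebra_simps)
      also have "cis (2 * pi * (of_int k + real n)) = 1"
        by (rule cis_multiple_2pi) (auto intro: Ints_add)
      finally show ?thesis by simp
    qed
    define s where "s n = r (\<theta> + 2 * pi * real n)" for n :: nat
    have zpos: "cmod z > 0" using False by auto
    have zm: "cmod z < m" using zb by auto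
    obtain \<phi> where \<phi>: "\<phi> \<ge> \<theta>" "\<bar>r \<phi>\<bar> < cmod z" "\<forall>\<psi>\<ge>\<phi>. \<bar>r \<psi>\<bar> < cmod z"
      using ev[OF zpos] unfolding eventually_at_top_linorder by (metis linorder_le_cases order.trans)
    obtain n0 :: nat where "real n0 \<ge> (\<phi> - \<theta>) / (2 * pi)" using real_arch_simple by blast
    then have "\<theta> + 2 * pi * real n0 \<ge> \<phi>" using pi_gt_zero by (simp add: field_simps)
    then have ex: "\<exists>n. s n \<le> cmod z" unfolding s_def using \<phi>(3) by (metis abs_less_iff less_imp_le)
    define N where "N = (LEAST n. s n \<le> cmod z)"
    have sN: "s N \<le> cmod z" unfolding N_def by (rule LeastI_ex[OF ex])
    have s0: "s 0 \<ge> m" unfolding s_def using low th1 th2 by auto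
    have N0: "N \<noteq> 0" using sN s0 zm by (metis less_le_not_le order.trans)
    then obtain M where NM: "N = Suc M" by (cases N) auto
    have sM: "s M > cmod z" using not_less_Least[of M "\<lambda>n. s n \<le> cmod z"] NM N_def by auto
    have "0 \<le> 2 * pi * real M" by simp
    then have "T1 \<le> \<theta> + 2 * pi * real M" using th1 by linarith
    then have "\<bar>s M - s N\<bar> < 2 * e" unfolding s_def NM using gap[of "\<theta> + 2 * pi * real M"]
      by (simp add: algebra_simps)
    then consider "s M - cmod z < e" | "cmod z - s N < e" using sM sN by linarith
    then obtain j where j: "\<bar>cmod z - s j\<bar> < e" using sM sN by (metis abs_of_nonneg abs_minus_commute diff_ge_0_iff_ge less_imp_le)
    have "T1 \<le> \<theta> + 2 * pi * real j" by (rule order.trans[OF th1]) simp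
    then have "\<theta> + 2 * pi * real j \<in> {T1..}" by simp
    moreover have "dist (complex_of_real (r (\<theta> + 2 * pi * real j)) * cis (\<theta> + 2 * pi * real j)) z < e"
    proof -
      have "complex_of_real (r (\<theta> + 2 * pi * real j)) * cis (\<theta> + 2 * pi * real j) - z
          = complex_of_real (s j - cmod z) * cis \<theta>0"
        unfolding cisth s_def by (subst (1) zrep) (simp add: algebra_simps)
      then show ?thesis using j by (simp add: dist_norm norm_mult abs_minus_commute flip: of_real_diff)
    qed
    ultimately show ?thesis unfolding eps_nbhd_def by force
  qed
qed

lemma vd_bound:
  fixes f :: "real \<Rightarrow> 'a::real_normed_vector"
  assumes "convex S" and der: "\<And>x. x \<in> S \<Longrightarrow> (f has_vector_derivative f' x) (at x within S)"
    and B: "\<And>x. x \<in> S \<Longrightarrow> norm (f' x) \<le> B" and "x \<in> S" "y \<in> S"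
  shows "norm (f x - f y) \<le> B * \<bar>x - y\<bar>"
proof -
  have "norm (f x - f y) \<le> B * norm (x - y)"
  proof (rule differentiable_bound[OF assms(1) _ _ assms(4,5)])
    show "(f has_derivative (\<lambda>h. h *\<^sub>R f' x)) (at x within S)" if "x \<in> S" for x
      using der[OF that] by (simp add: has_vector_derivative_def)
    show "onorm (\<lambda>h. h *\<^sub>R f' x) \<le> B" if "x \<in> S" for x
      by (rule onorm_le) (use B[OF that] in \<open>auto, metis abs_ge_zero mult.commute mult_right_mono\<close>)
  qed
  then show ?thesis by simp
qed

lemma cis_lip: "norm (cis x - cis y) \<le> \<bar>x - y\<bar>"
proof -
  have "norm (cis x - cis y) \<le> 1 * \<bar>x - y\<bar>"
  proof (rule vd_bound[where S=UNIV and f'="\<lambda>x. \<i> * cis x"])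
    show "(cis has_vector_derivative \<i> * cis x) (at x within UNIV)" for x
      using has_derivative_cis[OF has_derivative_ident[of "at x"]]
      by (simp add: has_vector_derivative_def)
  qed (auto simp: norm_mult)
  then show ?thesis by simp
qed

lemma gamma_lip:
  fixes r r' :: "real \<Rightarrow> real"
  assumes der: "\<And>\<phi>. \<phi> \<ge> \<phi>0 \<Longrightarrow> (r has_real_derivative r' \<phi>) (at \<phi> within {\<phi>0..})"
    and K: "\<And>\<phi>. \<phi> \<ge> \<phi>0 \<Longrightarrow> \<bar>r' \<phi>\<bar> \<le> K"
    and R: "\<And>\<phi>. \<phi> \<ge> \<phi>0 \<Longrightarrow> \<bar>r \<phi>\<bar> \<le> R"
    and xy: "x \<ge> \<phi>0" "y \<ge> \<phi>0"
  shows "dist (complex_of_real (r x) * cis x) (complex_of_real (r y) * cis y) \<le> (K + R) * \<bar>x - y\<bar>"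
proof -
  have rl: "norm (r x - r y) \<le> K * norm (x - y)"
    by (rule field_differentiable_bound[of "{\<phi>0..}" r r' K]) (use assms in auto)
  have "complex_of_real (r x) * cis x - complex_of_real (r y) * cis y
      = complex_of_real (r x - r y) * cis x + complex_of_real (r y) * (cis x - cis y)"
    by (simp add: algebra_simps)
  then have "dist (complex_of_real (r x) * cis x) (complex_of_real (r y) * cis y)
      \<le> norm (complex_of_real (r x - r y) * cis x) + norm (complex_of_real (r y) * (cis x - cis y))"
    by (simp add: dist_norm norm_triangle_ineq)
  also have "\<dots> \<le> K * \<bar>x - y\<bar> + R * \<bar>x - y\<bar>"
  proof (rule add_mono)
    show "norm (complex_of_real (r x - r y) * cis x) \<le> K * \<bar>x - y\<bar>" using rl by (simp add: norm_mult del: of_real_diff)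
    have "norm (complex_of_real (r y) * (cis x - cis y)) = \<bar>r y\<bar> * norm (cis x - cis y)" by (simp add: norm_mult)
    also have "\<dots> \<le> R * \<bar>x - y\<bar>" using R[OF xy(2)] cis_lip[of x y]
      by (intro mult_mono) auto
    finally show "norm (complex_of_real (r y) * (cis x - cis y)) \<le> R * \<bar>x - y\<bar>" .
  qed
  finally show ?thesis by (simp add: algebra_simps)
qed

lemma ratio_upper:
  fixes \<mu> U :: "real \<Rightarrow> real"
  assumes ev: "eventually (\<lambda>e. \<mu> e \<le> U e) (at_right 0)" and nn: "\<And>e. \<mu> e \<ge> 0"
    and lim: "((\<lambda>e. U e / e powr (2 - s)) \<longlongrightarrow> 0) (at_right 0)"
  shows "((\<lambda>e. \<mu> e / e powr (2 - s)) \<longlongrightarrow> 0) (at_right 0)"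
proof (rule tendsto_sandwich[OF _ _ tendsto_const lim])
  show "eventually (\<lambda>e. 0 \<le> \<mu> e / e powr (2 - s)) (at_right 0)" using nn by auto
  show "eventually (\<lambda>e. \<mu> e / e powr (2 - s) \<le> U e / e powr (2 - s)) (at_right 0)"
    using ev by eventually_elim (auto intro: divide_right_mono)
qed

lemma ratio_lower:
  fixes \<mu> V :: "real \<Rightarrow> real"
  assumes ev: "eventually (\<lambda>e. V e \<le> \<mu> e) (at_right 0)"
    and lim: "filterlim (\<lambda>e. V e / e powr (2 - s)) at_top (at_right 0)"
  shows "filterlim (\<lambda>e. \<mu> e / e powr (2 - s)) at_top (at_right 0)"
  by (rule filterlim_at_top_mono[OF lim]) (use ev in \<open>eventually_elim, auto intro: divide_right_mono\<close>)

lemma measure_eps_cball0: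
  assumes "e > 0"
  shows "measure lebesgue (eps_nbhd (cball 0 m) e) \<le> pi * (max 0 m + e)^2"
proof -
  have "measure lebesgue (eps_nbhd (cball 0 m) e) \<le> measure lebesgue (ball (0::complex) (max 0 m + e))"
    by (rule measure_mono_lebesgue[OF eps_nbhd_cball0[OF assms]])
       (auto simp: eps_nbhd_sets intro!: bounded_set_imp_lmeasurable)
  also have "\<dots> = pi * (max 0 m + e)^2" using assms by (intro measure_ball_complex) auto
  finally show ?thesis .
qed

lemma measure_eps_Un:
  "measure lebesgue (eps_nbhd (A \<union> C) e) \<le> measure lebesgue (eps_nbhd A e) + measure lebesgue (eps_nbhd C e)"
  unfolding eps_nbhd_Un by (rule measure_Un_le) (auto simp: eps_nbhd_sets)

lemma measure_eps_mono:
  assumes "A \<subseteq> C" "bounded C"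
  shows "measure lebesgue (eps_nbhd A e) \<le> measure lebesgue (eps_nbhd C e)"
  by (rule measure_mono_lebesgue[OF eps_nbhd_mono[OF assms(1)]]) (auto simp: eps_nbhd_sets eps_nbhd_lmeasurable assms)

lemma geoA:
  fixes r :: "real \<Rightarrow> real"
  defines "\<gamma> \<equiv> (\<lambda>\<phi>. complex_of_real (r \<phi>) * cis \<phi>)"
  assumes L: "L > 0" and lip: "\<And>x y. x \<ge> \<phi>0 \<Longrightarrow> y \<ge> \<phi>0 \<Longrightarrow> dist (\<gamma> x) (\<gamma> y) \<le> L * \<bar>x - y\<bar>"
    and pos: "\<And>\<phi>. \<phi> \<ge> \<phi>0 \<Longrightarrow> r \<phi> > 0" and cont: "continuous_on {\<phi>0..} r"
    and lim: "(r \<longlongrightarrow> 0) at_top"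
    and b: "b > 0" and c2: "c2 > 0" and dec: "\<And>\<phi>. \<phi> \<ge> T \<Longrightarrow> r \<phi> \<le> c2 * exp (- b * \<phi>)"
    and bdd: "bounded (\<gamma> ` {\<phi>0..})"
  shows "lower_box_dim (\<gamma> ` {\<phi>0..}) = 1 \<and> upper_box_dim (\<gamma> ` {\<phi>0..}) = 1"
proof (rule box_dims)
  define B where "B = \<gamma> ` {\<phi>0..}"
  define \<mu> where "\<mu> e = measure lebesgue (eps_nbhd B e)" for e
  have nn: "\<mu> e \<ge> 0" for e by (simp add: \<mu>_def)
  have normg: "norm (\<gamma> \<phi>) = r \<phi>" if "\<phi> \<ge> \<phi>0" for \<phi> using pos[OF that] by (simp add: \<gamma>_def norm_mult)
  define U where "U e = 4 * pi * L * (ln (1 / e) / b - \<phi>0) * e + 8 * pi * e^2 + pi * (c2 + 1)^2 * e^2" for e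
  have up: "\<mu> e \<le> U e" if e: "e > 0" and eT: "ln (1 / e) / b \<ge> max T \<phi>0" for e
  proof -
    define T1 where "T1 = ln (1 / e) / b"
    have eT1: "exp (- b * T1) = e" using e b by (simp add: T1_def ln_div)
    have sub: "B \<subseteq> \<gamma> ` {\<phi>0..T1} \<union> cball 0 (c2 * e)"
    proof
      fix z assume "z \<in> B"
      then obtain \<phi> where \<phi>: "\<phi> \<ge> \<phi>0" "z = \<gamma> \<phi>" by (auto simp: B_def)
      show "z \<in> \<gamma> ` {\<phi>0..T1} \<union> cball 0 (c2 * e)"
      proof (cases "\<phi> \<le> T1")
        case False
        then have "\<phi> \<ge> T" using eT by (simp add: T1_def)
        then have "r \<phi> \<le> c2 * exp (- b * \<phi>)" by (rule dec)
        also have "\<dots> \<le> c2 * exp (- b * T1)" using False b c2 by (intro mult_left_mono) auto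
        finally show ?thesis using normg[OF \<phi>(1)] \<phi>(2) eT1 by auto
      qed (use \<phi> in auto)
    qed
    have bU: "bounded (\<gamma> ` {\<phi>0..T1} \<union> cball 0 (c2 * e))"
      using bdd by (auto intro: bounded_subset)
    have "\<mu> e \<le> measure lebesgue (eps_nbhd (\<gamma> ` {\<phi>0..T1} \<union> cball 0 (c2 * e)) e)"
      unfolding \<mu>_def by (rule measure_eps_mono[OF sub bU])
    also have "\<dots> \<le> measure lebesgue (eps_nbhd (\<gamma> ` {\<phi>0..T1}) e) + measure lebesgue (eps_nbhd (cball 0 (c2 * e)) e)"
      by (rule measure_eps_Un)
    also have "\<dots> \<le> (L * (T1 - \<phi>0) / e + 2) * (4 * pi * e^2) + pi * (max 0 (c2 * e) + e)^2"
      using eT e by (intro add_mono cover_lip measure_eps_cball0 L lip) (auto simp: T1_def)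
    also have "\<dots> = U e" using e c2 by (simp add: U_def T1_def power2_eq_square field_simps)
    finally show ?thesis .
  qed
  have evT: "eventually (\<lambda>e. ln (1 / e) / b \<ge> max T \<phi>0) (at_right 0)" using b by real_asymp
  have evU: "eventually (\<lambda>e. \<mu> e \<le> U e) (at_right 0)"
    using evT eventually_at_right_less[of 0] by eventually_elim (use up in auto)
  show "((\<lambda>e. measure lebesgue (eps_nbhd (\<gamma> ` {\<phi>0..}) e) / e powr (2 - s)) \<longlongrightarrow> 0) (at_right 0)"
    if "s > 1" for s
  proof -
    have "((\<lambda>e. U e / e powr (2 - s)) \<longlongrightarrow> 0) (at_right 0)" unfolding U_def using that b by real_asymp
    then show ?thesis using ratio_upper[OF evU nn] unfolding \<mu>_def B_def by blast
  qed
  show "filterlim (\<lambda>e. measure lebesgue (eps_nbhd (\<gamma> ` {\<phi>0..}) e) / e powr (2 - s)) at_top (at_right 0)"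
    if "s < 1" for s
  proof -
    define D where "D = r \<phi>0"
    have D: "D > 0" using pos by (simp add: D_def)
    have hit: "\<exists>z\<in>B. cmod z = t" if t: "0 < t" "t \<le> D" for t
    proof -
      have "eventually (\<lambda>\<phi>. \<bar>r \<phi>\<bar> < t) at_top" using lim t by (auto simp: tendsto_iff dist_real_def)
      then have "eventually (\<lambda>\<phi>. r \<phi> < t) at_top" by eventually_elim auto
      then obtain N where N: "\<And>\<phi>. \<phi> \<ge> N \<Longrightarrow> r \<phi> < t" unfolding eventually_at_top_linorder by auto
      define X where "X = max N \<phi>0"
      have X: "X \<ge> \<phi>0" "r X < t" using N by (auto simp: X_def)
      have cX: "continuous_on {\<phi>0..X} r" by (rule continuous_on_subset[OF cont]) auto
      obtain \<phi> where \<phi>: "\<phi>0 \<le> \<phi>" "\<phi> \<le> X" "r \<phi> = t"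
        using IVT2'[of r X t \<phi>0, OF _ _ _ cX] X t by (auto simp: D_def)
      then show ?thesis using normg[OF \<phi>(1)] by (auto simp: B_def)
    qed
    have bB: "bounded B" using bdd by (simp add: B_def)
    have low: "pi * D * e / 4 \<le> \<mu> e" if "0 < e" "e \<le> D / 4" for e
      unfolding \<mu>_def by (rule lower_lin[OF bB D hit that]) auto
    have "eventually (\<lambda>e. e \<le> D / 4) (at_right 0)" using D by real_asymp
    then have evL: "eventually (\<lambda>e. pi * D * e / 4 \<le> \<mu> e) (at_right 0)"
      using eventually_at_right_less[of 0] by eventually_elim (use low in auto)
    have "filterlim (\<lambda>e. pi * D * e / 4 / e powr (2 - s)) at_top (at_right 0)"
      using D that by real_asymp
    then show ?thesis using ratio_lower[OF evL] unfolding \<mu>_def B_def by blast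
  qed
qed

lemma cis_vd: "(cis has_vector_derivative \<i> * cis x) (at x)"
  using has_derivative_cis[OF has_derivative_ident[of "at x"]] by (simp add: has_vector_derivative_def)

lemma gamma_vd:
  assumes "(r has_real_derivative r' \<phi>) (at \<phi>)"
  shows "((\<lambda>\<phi>. complex_of_real (r \<phi>) * cis \<phi>) has_vector_derivative
           (complex_of_real (r \<phi>) * (\<i> * cis \<phi>) + complex_of_real (r' \<phi>) * cis \<phi>)) (at \<phi>)"
  by (rule has_vector_derivative_mult[OF has_vector_derivative_of_real[OF assms] cis_vd])

lemma reparam_lip:
  fixes \<gamma> \<gamma>' :: "real \<Rightarrow> complex"
  assumes \<alpha>: "0 < \<alpha>" "\<alpha> < 1" and T: "T \<ge> 1"
    and der: "\<And>\<phi>. \<phi> \<ge> T \<Longrightarrow> (\<gamma> has_vector_derivative \<gamma>' \<phi>) (at \<phi>)"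
    and bd: "\<And>\<phi>. \<phi> \<ge> T \<Longrightarrow> norm (\<gamma>' \<phi>) \<le> M * \<phi> powr (- \<alpha>)"
    and s: "s \<ge> T powr (1 - \<alpha>)" "s' \<ge> T powr (1 - \<alpha>)"
  shows "norm (\<gamma> (s powr (1 / (1 - \<alpha>))) - \<gamma> (s' powr (1 / (1 - \<alpha>)))) \<le> (M / (1 - \<alpha>)) * \<bar>s - s'\<bar>"
proof -
  define q where "q = 1 / (1 - \<alpha>)"
  have q: "q > 0" "q * (1 - \<alpha>) = 1" using \<alpha> by (auto simp: q_def)
  define S where "S = {T powr (1 - \<alpha>)..}"
  have Tp: "T powr (1 - \<alpha>) > 0" using T by simp
  have xpos: "x > 0" if "x \<in> S" for x
  proof -
    have "x \<ge> T powr (1 - \<alpha>)" using that by (simp add: S_def)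
    then show ?thesis using Tp by linarith
  qed
  have th: "x powr q \<ge> T" if "x \<in> S" for x
  proof -
    have "(T powr (1 - \<alpha>)) powr q \<le> x powr q" using that q Tp by (intro powr_mono2) (auto simp: S_def)
    moreover have "(T powr (1 - \<alpha>)) powr q = T" using q T by (simp add: powr_powr mult.commute)
    ultimately show ?thesis by simp
  qed
  have "norm ((\<gamma> \<circ> (\<lambda>x. x powr q)) s - (\<gamma> \<circ> (\<lambda>x. x powr q)) s') \<le> (q * M) * \<bar>s - s'\<bar>"
  proof (rule vd_bound[where S = S and f' = "\<lambda>x. (q * x powr (q - 1)) *\<^sub>R \<gamma>' (x powr q)"])
    show "convex S" by (simp add: S_def)
    show "s \<in> S" "s' \<in> S" using s by (auto simp: S_def)
    fix x assume x: "x \<in> S"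
    have "((\<lambda>x. x powr q) has_vector_derivative q * x powr (q - 1)) (at x)"
      using has_real_derivative_powr[OF xpos[OF x], of q] by (simp add: has_real_derivative_iff_has_vector_derivative)
    from vector_diff_chain_at[OF this der[OF th[OF x]]]
    show "((\<gamma> \<circ> (\<lambda>x. x powr q)) has_vector_derivative (q * x powr (q - 1)) *\<^sub>R \<gamma>' (x powr q)) (at x within S)"
      by (rule has_vector_derivative_at_within)
    have "norm ((q * x powr (q - 1)) *\<^sub>R \<gamma>' (x powr q)) = q * x powr (q - 1) * norm (\<gamma>' (x powr q))"
      using q xpos[OF x] by simp
    also have "\<dots> \<le> q * x powr (q - 1) * (M * (x powr q) powr (- \<alpha>))"
      using bd[OF th[OF x]] q xpos[OF x] by (intro mult_left_mono) auto
    also have "\<dots> = q * M * (x powr (q - 1) * x powr (- (q * \<alpha>)))" by (simp add: powr_powr)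
    also have "x powr (q - 1) * x powr (- (q * \<alpha>)) = x powr (q - 1 - q * \<alpha>)"
      by (simp add: powr_add[symmetric])
    also have "q - 1 - q * \<alpha> = 0" using q by (simp add: algebra_simps)
    finally show "norm ((q * x powr (q - 1)) *\<^sub>R \<gamma>' (x powr q)) \<le> q * M" using xpos[OF x] by simp
  qed
  then show ?thesis by (simp add: q_def)
qed

lemma geoB:
  fixes r r' :: "real \<Rightarrow> real"
  defines "\<gamma> \<equiv> (\<lambda>\<phi>. complex_of_real (r \<phi>) * cis \<phi>)"
  assumes L: "L > 0" and lip: "\<And>x y. x \<ge> \<phi>0 \<Longrightarrow> y \<ge> \<phi>0 \<Longrightarrow> dist (\<gamma> x) (\<gamma> y) \<le> L * \<bar>x - y\<bar>"
    and \<alpha>: "0 < \<alpha>" "\<alpha> < 1" and T: "T \<ge> 1" "\<phi>0 \<le> T"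
    and c1: "c1 > 0" and c2: "c2 > 0" and C: "C > 0"
    and rb: "\<And>\<phi>. \<phi> \<ge> T \<Longrightarrow> c1 * \<phi> powr (- \<alpha>) \<le> r \<phi> \<and> r \<phi> \<le> c2 * \<phi> powr (- \<alpha>)"
    and der: "\<And>\<phi>. \<phi> \<ge> T \<Longrightarrow> (r has_real_derivative r' \<phi>) (at \<phi>)"
    and r'b: "\<And>\<phi>. \<phi> \<ge> T \<Longrightarrow> \<bar>r' \<phi>\<bar> \<le> C * \<phi> powr (- \<alpha> - 1)"
    and bdd: "bounded (\<gamma> ` {\<phi>0..})"
  shows "lower_box_dim (\<gamma> ` {\<phi>0..}) = 2 / (1 + \<alpha>) \<and> upper_box_dim (\<gamma> ` {\<phi>0..}) = 2 / (1 + \<alpha>)"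
proof (rule box_dims)
  define B where "B = \<gamma> ` {\<phi>0..}"
  define \<mu> where "\<mu> e = measure lebesgue (eps_nbhd B e)" for e
  define p where "p = 2 * \<alpha> / (1 + \<alpha>)"
  define \<beta> where "\<beta> = 1 / (1 + \<alpha>)"
  have p: "0 < p" "p < 1" "2 - p = 2 / (1 + \<alpha>)" using \<alpha> by (auto simp: p_def field_simps)
  have \<beta>: "\<beta> > 0" "\<beta> * (1 + \<alpha>) = 1" "2 * \<alpha> * \<beta> = p" using \<alpha> by (auto simp: \<beta>_def p_def)
  have nn: "\<mu> e \<ge> 0" for e by (simp add: \<mu>_def)
  have rpos: "r \<phi> > 0" if "\<phi> \<ge> T" for \<phi> using rb[OF that] c1 T that
    by (smt (verit) mult_pos_pos powr_gt_zero)
  have normg: "norm (\<gamma> \<phi>) = r \<phi>" if "\<phi> \<ge> T" for \<phi> using rpos[OF that] by (simp add: \<gamma>_def norm_mult)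
  have bB: "bounded B" using bdd by (simp add: B_def)
  show "((\<lambda>e. measure lebesgue (eps_nbhd (\<gamma> ` {\<phi>0..}) e) / e powr (2 - s)) \<longlongrightarrow> 0) (at_right 0)"
    if s: "s > 2 / (1 + \<alpha>)" for s
  proof -
    define L1 where "L1 = (c2 + C) / (1 - \<alpha>)"
    have L1: "L1 > 0" using c2 C \<alpha> by (simp add: L1_def)
    define q where "q = 1 / (1 - \<alpha>)"
    define g where "g s = \<gamma> (s powr q)" for s
    have glip: "dist (g x) (g y) \<le> L1 * \<bar>x - y\<bar>" if "x \<ge> T powr (1 - \<alpha>)" "y \<ge> T powr (1 - \<alpha>)" for x y
    proof -
      have "norm (\<gamma> (x powr (1 / (1 - \<alpha>))) - \<gamma> (y powr (1 / (1 - \<alpha>)))) \<le> ((c2 + C) / (1 - \<alpha>)) * \<bar>x - y\<bar>"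
      proof (rule reparam_lip[OF \<alpha> T(1) _ _ that])
        fix \<phi> :: real assume \<phi>: "\<phi> \<ge> T"
        show "(\<gamma> has_vector_derivative (complex_of_real (r \<phi>) * (\<i> * cis \<phi>) + complex_of_real (r' \<phi>) * cis \<phi>)) (at \<phi>)"
          unfolding \<gamma>_def by (rule gamma_vd[of r r' \<phi>, OF der[OF \<phi>]])
        have "norm (complex_of_real (r \<phi>) * (\<i> * cis \<phi>) + complex_of_real (r' \<phi>) * cis \<phi>) \<le> \<bar>r \<phi>\<bar> + \<bar>r' \<phi>\<bar>"
          by (rule order.trans[OF norm_triangle_ineq]) (simp add: norm_mult)
        also have "\<dots> \<le> c2 * \<phi> powr (- \<alpha>) + C * \<phi> powr (- \<alpha>)"
        proof (rule add_mono)
          show "\<bar>r \<phi>\<bar> \<le> c2 * \<phi> powr (- \<alpha>)" using rb[OF \<phi>] rpos[OF \<phi>] by simp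
          have "\<phi> powr (- \<alpha> - 1) \<le> \<phi> powr (- \<alpha>)" using \<phi> T by (intro powr_mono) auto
          then show "\<bar>r' \<phi>\<bar> \<le> C * \<phi> powr (- \<alpha>)" using r'b[OF \<phi>] C by (smt (verit) mult_left_mono)
        qed
        finally show "norm (complex_of_real (r \<phi>) * (\<i> * cis \<phi>) + complex_of_real (r' \<phi>) * cis \<phi>) \<le> (c2 + C) * \<phi> powr (- \<alpha>)"
          by (simp add: algebra_simps)
      qed
      then show ?thesis by (simp add: g_def q_def L1_def dist_norm)
    qed
    define U where "U e = 4 * pi * L * (T - \<phi>0) * e + 16 * pi * e^2 + 4 * pi * L1 * e powr p + pi * (2 * c2^2 * e powr p + 2 * e^2)" for e
    have up: "\<mu> e \<le> U e" if e: "e > 0" and eT: "e powr (- \<beta>) \<ge> T" for e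
    proof -
      define T1 where "T1 = e powr (- \<beta>)"
      define s0 where "s0 = T powr (1 - \<alpha>)"
      define s1 where "s1 = T1 powr (1 - \<alpha>)"
      have T1: "T1 \<ge> T" using eT by (simp add: T1_def)
      have s01: "s0 \<le> s1" unfolding s0_def s1_def using T1 T \<alpha> by (intro powr_mono2) auto
      have s0p: "s0 > 0" using T by (simp add: s0_def)
      have qa: "q * (1 - \<alpha>) = 1" using \<alpha> by (simp add: q_def)
      have sub: "B \<subseteq> \<gamma> ` {\<phi>0..T} \<union> (g ` {s0..s1} \<union> cball 0 (c2 * T1 powr (- \<alpha>)))"
      proof
        fix z assume "z \<in> B"
        then obtain \<phi> where \<phi>: "\<phi> \<ge> \<phi>0" "z = \<gamma> \<phi>" by (auto simp: B_def)
        consider "\<phi> \<le> T" | "T \<le> \<phi>" "\<phi> \<le> T1" | "T1 < \<phi>" by linarith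
        then show "z \<in> \<gamma> ` {\<phi>0..T} \<union> (g ` {s0..s1} \<union> cball 0 (c2 * T1 powr (- \<alpha>)))"
        proof cases
          case 1 then show ?thesis using \<phi> by auto
        next
          case 2
          have "\<phi> powr (1 - \<alpha>) \<in> {s0..s1}" unfolding s0_def s1_def using 2 T \<alpha> by (auto intro!: powr_mono2)
          moreover have "g (\<phi> powr (1 - \<alpha>)) = z" using 2 T qa \<phi> by (simp add: g_def powr_powr mult.commute)
          ultimately show ?thesis by blast
        next
          case 3
          then have "r \<phi> \<le> c2 * \<phi> powr (- \<alpha>)" using rb T1 by simp
          also have "\<dots> \<le> c2 * T1 powr (- \<alpha>)" using 3 T1 T c2 \<alpha> by (intro mult_left_mono powr_mono2') auto
          finally show ?thesis using normg[of \<phi>] 3 T1 \<phi> by auto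
        qed
      qed
      have bU: "bounded (\<gamma> ` {\<phi>0..T} \<union> (g ` {s0..s1} \<union> cball 0 (c2 * T1 powr (- \<alpha>))))"
      proof -
        have "g ` {s0..s1} \<subseteq> \<gamma> ` {\<phi>0..}"
        proof
          fix z assume "z \<in> g ` {s0..s1}"
          then obtain x where x: "x \<in> {s0..s1}" "z = \<gamma> (x powr q)" by (auto simp: g_def)
          have "(s0 powr q) \<le> x powr q" using x s0p \<alpha> by (intro powr_mono2) (auto simp: q_def)
          moreover have "s0 powr q = T" using qa T by (simp add: s0_def powr_powr mult.commute)
          ultimately show "z \<in> \<gamma> ` {\<phi>0..}" using x T by auto
        qed
        then show ?thesis using bdd by (auto intro: bounded_subset)
      qed
      have "\<mu> e \<le> measure lebesgue (eps_nbhd (\<gamma> ` {\<phi>0..T} \<union> (g ` {s0..s1} \<union> cball 0 (c2 * T1 powr (- \<alpha>)))) e)"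
        unfolding \<mu>_def by (rule measure_eps_mono[OF sub bU])
      also have "\<dots> \<le> measure lebesgue (eps_nbhd (\<gamma> ` {\<phi>0..T}) e) +
          (measure lebesgue (eps_nbhd (g ` {s0..s1}) e) + measure lebesgue (eps_nbhd (cball 0 (c2 * T1 powr (- \<alpha>))) e))"
        by (rule order.trans[OF measure_eps_Un add_left_mono[OF measure_eps_Un]])
      also have "\<dots> \<le> (L * (T - \<phi>0) / e + 2) * (4 * pi * e^2) +
          ((L1 * (s1 - s0) / e + 2) * (4 * pi * e^2) + pi * (max 0 (c2 * T1 powr (- \<alpha>)) + e)^2)"
      proof (intro add_mono)
        show "measure lebesgue (eps_nbhd (\<gamma> ` {\<phi>0..T}) e) \<le> (L * (T - \<phi>0) / e + 2) * (4 * pi * e^2)"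
          using T e L lip by (intro cover_lip) auto
        show "measure lebesgue (eps_nbhd (g ` {s0..s1}) e) \<le> (L1 * (s1 - s0) / e + 2) * (4 * pi * e^2)"
          using s01 e L1 glip by (intro cover_lip) (auto simp: s0_def)
        show "measure lebesgue (eps_nbhd (cball 0 (c2 * T1 powr (- \<alpha>))) e) \<le> pi * (max 0 (c2 * T1 powr (- \<alpha>)) + e)^2"
          using e by (rule measure_eps_cball0)
      qed
      also have "\<dots> \<le> U e"
      proof -
        have e1: "s1 * e = e powr p"
        proof -
          have "s1 * e = e powr (- \<beta> * (1 - \<alpha>)) * e" using e by (simp add: s1_def T1_def powr_powr)
          also have "\<dots> = e powr (- \<beta> * (1 - \<alpha>) + 1)"
            unfolding powr_add[of e "- \<beta> * (1 - \<alpha>)" 1] using e by (simp add: powr_one)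
          also have "- \<beta> * (1 - \<alpha>) + 1 = p" using \<alpha> by (simp add: \<beta>_def p_def field_simps)
          finally show ?thesis .
        qed
        have e2: "(T1 powr (- \<alpha>))^2 = e powr p"
        proof -
          have "(T1 powr (- \<alpha>))^2 = e powr (\<alpha> * \<beta>) * e powr (\<alpha> * \<beta>)"
            by (simp add: T1_def powr_powr power2_eq_square mult.commute)
          also have "\<dots> = e powr p" using \<beta>(3) by (simp add: powr_add[symmetric] mult.assoc)
          finally show ?thesis .
        qed
        have m0: "max 0 (c2 * T1 powr (- \<alpha>)) = c2 * T1 powr (- \<alpha>)" using c2 by simp
        have sq: "(x + y)^2 \<le> 2 * x^2 + 2 * y^2" for x y :: real
        proof -
          have "0 \<le> (x - y)^2" by simp
          then show ?thesis by (simp add: power2_eq_square algebra_simps)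
        qed
        have "(L1 * (s1 - s0) / e + 2) * (4 * pi * e^2) \<le> 4 * pi * L1 * (s1 * e) + 8 * pi * e^2"
        proof -
          have "(L1 * (s1 - s0) / e + 2) * (4 * pi * e^2) = 4 * pi * L1 * ((s1 - s0) * e) + 8 * pi * e^2"
            using e by (simp add: field_simps power2_eq_square)
          also have "\<dots> \<le> 4 * pi * L1 * (s1 * e) + 8 * pi * e^2" using s0p e L1 by (simp add: mult_left_mono mult_right_mono)
          finally show ?thesis .
        qed
        moreover have "(L * (T - \<phi>0) / e + 2) * (4 * pi * e^2) = 4 * pi * L * (T - \<phi>0) * e + 8 * pi * e^2"
          using e by (simp add: field_simps power2_eq_square)
        moreover have "pi * (max 0 (c2 * T1 powr (- \<alpha>)) + e)^2 \<le> pi * (2 * c2^2 * e powr p + 2 * e^2)"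
          unfolding m0 using sq[of "c2 * T1 powr (- \<alpha>)" e] e2 by (simp add: power_mult_distrib)
        ultimately show ?thesis unfolding U_def e1[symmetric] by linarith
      qed
      finally show ?thesis .
    qed
    have evT: "eventually (\<lambda>e. e powr (- \<beta>) \<ge> T) (at_right 0)" using \<beta> by real_asymp
    have evU: "eventually (\<lambda>e. \<mu> e \<le> U e) (at_right 0)"
      using evT eventually_at_right_less[of 0] by eventually_elim (use up in auto)
    have "s > 2 - p" using s p by simp
    then have "((\<lambda>e. U e / e powr (2 - s)) \<longlongrightarrow> 0) (at_right 0)" unfolding U_def using p by real_asymp
    then show ?thesis using ratio_upper[OF evU nn] unfolding \<mu>_def B_def by blast
  qed
  show "filterlim (\<lambda>e. measure lebesgue (eps_nbhd (\<gamma> ` {\<phi>0..}) e) / e powr (2 - s)) at_top (at_right 0)"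
    if s: "s < 2 / (1 + \<alpha>)" for s
  proof -
    have lim: "(r \<longlongrightarrow> 0) at_top"
    proof (rule tendsto_sandwich[of "\<lambda>_. 0" _ _ "\<lambda>\<phi>. c2 * \<phi> powr (- \<alpha>)"])
      show "eventually (\<lambda>\<phi>. 0 \<le> r \<phi>) at_top"
        using eventually_ge_at_top[of T] by eventually_elim (use rpos in \<open>auto intro: less_imp_le\<close>)
      show "eventually (\<lambda>\<phi>. r \<phi> \<le> c2 * \<phi> powr (- \<alpha>)) at_top"
        using eventually_ge_at_top[of T] by eventually_elim (use rb in auto)
      show "((\<lambda>\<phi>. c2 * \<phi> powr (- \<alpha>)) \<longlongrightarrow> 0) at_top" using \<alpha> by real_asymp
    qed simp
    define K where "K = (2 * pi * C) powr \<beta>"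
    have K: "K > 0" using C by (simp add: K_def)
    define V where "V e = pi * c1^2 * (2 * K) powr (- 2 * \<alpha>) * e powr p" for e
    have low: "V e \<le> \<mu> e" if e: "e > 0" and eT: "K * e powr (- \<beta>) \<ge> max T (2 * pi)" for e
    proof -
      define T1 where "T1 = K * e powr (- \<beta>)"
      have T1: "T1 \<ge> T" "T1 \<ge> 2 * pi" using eT by (auto simp: T1_def)
      have T1p: "T1 > 0" using T1 T by linarith
      have T1pow: "C * T1 powr (- \<alpha> - 1) = e / (2 * pi)"
      proof -
        have "T1 powr (- \<alpha> - 1) = K powr (- \<alpha> - 1) * (e powr (- \<beta>)) powr (- \<alpha> - 1)"
          using K e by (simp add: T1_def powr_mult)
        also have "K powr (- \<alpha> - 1) = (2 * pi * C) powr (- 1)"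
        proof -
          have ex: "\<beta> * (- \<alpha> - 1) = -1" using \<beta>(2) by (simp add: algebra_simps)
          show ?thesis unfolding K_def by (simp only: powr_powr ex)
        qed
        also have "(e powr (- \<beta>)) powr (- \<alpha> - 1) = e powr 1"
          using \<beta>(2) by (simp add: powr_powr algebra_simps)
        finally show ?thesis using C e by (simp add: powr_minus_divide powr_one field_simps)
      qed
      have gap: "\<bar>r \<phi> - r (\<phi> + 2 * pi)\<bar> < 2 * e" if \<phi>: "\<phi> \<ge> T1" for \<phi>
      proof -
        obtain z where z: "\<phi> < z" "z < \<phi> + 2 * pi" "r (\<phi> + 2 * pi) - r \<phi> = (\<phi> + 2 * pi - \<phi>) * r' z"
          using MVT2[of \<phi> "\<phi> + 2 * pi" r r'] der \<phi> T1 by (smt (verit) pi_gt_zero)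
        have "\<bar>r' z\<bar> \<le> C * z powr (- \<alpha> - 1)" using z \<phi> T1 by (intro r'b) auto
        also have "\<dots> \<le> C * T1 powr (- \<alpha> - 1)" using z \<phi> T1p C \<alpha> by (intro mult_left_mono powr_mono2') auto
        also have "\<dots> = e / (2 * pi)" by (rule T1pow)
        finally have "\<bar>r (\<phi> + 2 * pi) - r \<phi>\<bar> \<le> 2 * pi * (e / (2 * pi))"
          using z(3) pi_gt_zero by (simp add: abs_mult field_simps)
        then show ?thesis using e by (simp add: abs_minus_commute)
      qed
      define m where "m = c1 * (2 * T1) powr (- \<alpha>)"
      have m: "m > 0" using c1 T1p by (simp add: m_def)
      have mle: "m \<le> r \<phi>" if "\<phi> \<in> {T1..T1 + 2 * pi}" for \<phi>
      proof -
        have "m \<le> c1 * \<phi> powr (- \<alpha>)" unfolding m_def using that T1 T1p c1 \<alpha>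
          by (intro mult_left_mono powr_mono2') auto
        also have "\<dots> \<le> r \<phi>" using rb[of \<phi>] that T1 by auto
        finally show ?thesis .
      qed
      have "ball 0 m \<subseteq> eps_nbhd (\<gamma> ` {T1..}) e"
        unfolding \<gamma>_def by (rule disc_lower[OF e m gap lim mle])
      also have "\<dots> \<subseteq> eps_nbhd B e" using T1 T unfolding B_def by (intro eps_nbhd_mono) auto
      finally have sb: "ball 0 m \<subseteq> eps_nbhd B e" .
      have "pi * m^2 \<le> \<mu> e"
        using measure_mono_lebesgue[OF sb eps_nbhd_lmeasurable[OF bB]] m
        by (simp add: \<mu>_def measure_ball_complex content_ball_complex)
      moreover have "pi * m^2 = V e"
      proof -
        have "m^2 = c1^2 * ((2 * T1) powr (- \<alpha>))^2" by (simp add: m_def power_mult_distrib)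
        also have "((2 * T1) powr (- \<alpha>))^2 = (2 * T1) powr (- 2 * \<alpha>)"
          using T1p by (simp add: power2_eq_square powr_add[symmetric])
        also have "(2 * T1) powr (- 2 * \<alpha>) = (2 * K) powr (- 2 * \<alpha>) * (e powr (- \<beta>)) powr (- 2 * \<alpha>)"
          using K e by (simp add: T1_def powr_mult mult.assoc)
        also have "(e powr (- \<beta>)) powr (- 2 * \<alpha>) = e powr p" using \<beta>(3) by (simp add: powr_powr algebra_simps)
        finally show ?thesis by (simp add: V_def)
      qed
      ultimately show ?thesis by simp
    qed
    have evT: "eventually (\<lambda>e. K * e powr (- \<beta>) \<ge> max T (2 * pi)) (at_right 0)" using \<beta> K by real_asymp
    have evL: "eventually (\<lambda>e. V e \<le> \<mu> e) (at_right 0)"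
      using evT eventually_at_right_less[of 0] by eventually_elim (use low in auto)
    have "s < 2 - p" using s p by simp
    then have "filterlim (\<lambda>e. V e / e powr (2 - s)) at_top (at_right 0)"
      unfolding V_def using p c1 K by real_asymp
    then show ?thesis using ratio_lower[OF evL] unfolding \<mu>_def B_def by blast
  qed
qed

lemma barrier_up:
  fixes f f' :: "real \<Rightarrow> real"
  assumes ax: "a \<le> x" and cont: "continuous_on {a..x} f"
    and der: "\<And>y. a < y \<Longrightarrow> y < x \<Longrightarrow> (f has_real_derivative f' y) (at y)"
    and fa: "f a \<le> M" and MM: "M < Mb"
    and sgn: "\<And>y. a < y \<Longrightarrow> y < x \<Longrightarrow> M < f y \<Longrightarrow> f y < Mb \<Longrightarrow> f' y \<le> 0"
  shows "f x \<le> M"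
proof (rule ccontr)
  assume "\<not> f x \<le> M"
  then have fx: "f x > M" by simp
  define L where "L = min (f x) ((M + Mb) / 2)"
  have "L \<le> (M + Mb) / 2" unfolding L_def by (rule min.cobounded2)
  then have L: "M < L" "L \<le> f x" "L < Mb" using fx MM by (auto simp: L_def)
  define S where "S = {a..x} \<inter> f -` {..M}"
  have clS: "closed S" unfolding S_def by (rule continuous_closed_preimage[OF cont]) auto
  have aS: "a \<in> S" using ax fa by (auto simp: S_def)
  define s where "s = Sup S"
  have sS: "s \<in> S" unfolding s_def using clS aS by (intro closed_contains_Sup) (auto simp: S_def bdd_above_def)
  have sle: "\<And>t. t \<in> S \<Longrightarrow> t \<le> s" unfolding s_def by (rule cSup_upper) (auto simp: S_def bdd_above_def)
  have s1: "a \<le> s" "s \<le> x" "f s \<le> M" using sS by (auto simp: S_def)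
  define T where "T = {s..x} \<inter> f -` {L..}"
  have contT: "continuous_on {s..x} f" by (rule continuous_on_subset[OF cont]) (use s1 in auto)
  have clT: "closed T" unfolding T_def by (rule continuous_closed_preimage[OF contT]) auto
  have xT: "x \<in> T" using s1 L by (auto simp: T_def)
  define u where "u = Inf T"
  have uT: "u \<in> T" unfolding u_def using clT xT by (intro closed_contains_Inf) (auto simp: T_def bdd_below_def)
  have uge: "\<And>t. t \<in> T \<Longrightarrow> u \<le> t" unfolding u_def by (rule cInf_lower) (auto simp: T_def bdd_below_def)
  have u1: "s \<le> u" "u \<le> x" "L \<le> f u" using uT by (auto simp: T_def)
  have "f u \<le> f s"
  proof (rule DERIV_nonpos_imp_decreasing_open[OF u1(1)])
    show "continuous_on {s..u} f" by (rule continuous_on_subset[OF cont]) (use s1 u1 in auto)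
    fix y assume y: "s < y" "y < u"
    have "y \<notin> S" using sle y by force
    then have "M < f y" using y s1 u1 by (auto simp: S_def)
    moreover have "y \<notin> T" using uge y by force
    then have "f y < L" using y s1 u1 by (auto simp: T_def)
    ultimately show "\<exists>d. (f has_real_derivative d) (at y) \<and> d \<le> 0"
      using der sgn y s1 u1 L by (intro exI[of _ "f' y"]) auto
  qed
  then show False using u1 s1 L by linarith
qed

lemma barrier_down:
  fixes f f' :: "real \<Rightarrow> real"
  assumes ax: "a \<le> x" and cont: "continuous_on {a..x} f"
    and der: "\<And>y. a < y \<Longrightarrow> y < x \<Longrightarrow> (f has_real_derivative f' y) (at y)"
    and fa: "f a \<ge> M" and MM: "Mb < M"
    and sgn: "\<And>y. a < y \<Longrightarrow> y < x \<Longrightarrow> Mb < f y \<Longrightarrow> f y < M \<Longrightarrow> f' y \<ge> 0"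
  shows "f x \<ge> M"
proof -
  have "(\<lambda>y. - f y) x \<le> - M"
    by (rule barrier_up[of a x "\<lambda>y. - f y" "\<lambda>y. - f' y" "-M" "-Mb"])
       (use assms in \<open>auto intro!: continuous_intros derivative_eq_intros\<close>)
  then show ?thesis by simp
qed

definition Spol :: "(nat \<Rightarrow> real) \<Rightarrow> nat \<Rightarrow> real \<Rightarrow> real" where
  "Spol a l x = (\<Sum>j\<le>l. a j * x ^ (2 * j))"

definition Wpol :: "(nat \<Rightarrow> real) \<Rightarrow> nat \<Rightarrow> nat \<Rightarrow> real \<Rightarrow> real" where
  "Wpol a k l x = (\<Sum>j\<in>{k..l}. a j * x ^ (2 * (j - k)))"

lemma Spol_eq:
  assumes "k \<le> l" "\<forall>j<k. a j = 0"
  shows "Spol a l x = x ^ (2 * k) * Wpol a k l x"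
proof -
  have e: "{..l} = {..<k} \<union> {k..l}" using assms by auto
  have "Spol a l x = (\<Sum>j\<in>{..<k} \<union> {k..l}. a j * x ^ (2 * j))"
    unfolding Spol_def by (simp only: e)
  also have "\<dots> = (\<Sum>j<k. a j * x ^ (2 * j)) + (\<Sum>j\<in>{k..l}. a j * x ^ (2 * j))"
    by (rule sum.union_disjoint) auto
  also have "(\<Sum>j<k. a j * x ^ (2 * j)) = 0" using assms by simp
  also have "(\<Sum>j\<in>{k..l}. a j * x ^ (2 * j)) = (\<Sum>j\<in>{k..l}. x ^ (2 * k) * (a j * x ^ (2 * (j - k))))"
  proof (rule sum.cong)
    fix j assume "j \<in> {k..l}"
    then have "2 * j = 2 * k + 2 * (j - k)" by auto
    then show "a j * x ^ (2 * j) = x ^ (2 * k) * (a j * x ^ (2 * (j - k)))" by (simp add: power_add)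
  qed simp
  finally show ?thesis unfolding Wpol_def by (simp add: sum_distrib_left)
qed

lemma Wpol_bound:
  assumes "k \<le> l" "\<bar>x\<bar> \<le> 1"
  shows "\<bar>Wpol a k l x - a k\<bar> \<le> (\<Sum>j\<in>{k<..l}. \<bar>a j\<bar>) * x^2"
proof -
  have "{k..l} = insert k {k<..l}" using assms by auto
  then have "Wpol a k l x - a k = (\<Sum>j\<in>{k<..l}. a j * x ^ (2 * (j - k)))"
    unfolding Wpol_def by simp
  also have "\<bar>\<dots>\<bar> \<le> (\<Sum>j\<in>{k<..l}. \<bar>a j * x ^ (2 * (j - k))\<bar>)" by (rule sum_abs)
  also have "\<dots> \<le> (\<Sum>j\<in>{k<..l}. \<bar>a j\<bar> * x^2)"
  proof (rule sum_mono)
    fix j assume j: "j \<in> {k<..l}"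
    then obtain n where n: "j - k = Suc n" by (cases "j - k") auto
    have "x ^ (2 * (j - k)) = (x^2) ^ (Suc n)" unfolding n by (simp only: power_mult)
    then have "x ^ (2 * (j - k)) = x^2 * (x^2) ^ n" by simp
    moreover have "(x^2) ^ n \<le> 1"
    proof -
      have "x^2 \<le> 1" using assms by (simp add: abs_square_le_1)
      then show ?thesis by (rule power_le_one[OF zero_le_power2])
    qed
    moreover have "x^2 * (x^2) ^ n \<le> x^2" by (rule mult_left_le) (use calculation in auto)
    moreover have "x^2 * (x^2) ^ n \<ge> 0" by simp
    ultimately have "\<bar>x ^ (2 * (j - k))\<bar> \<le> x^2" by simp
    then show "\<bar>a j * x ^ (2 * (j - k))\<bar> \<le> \<bar>a j\<bar> * x^2" by (simp add: abs_mult mult_left_mono)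
  qed
  finally show ?thesis by (simp add: sum_distrib_right)
qed

definition Ksum :: "(nat \<Rightarrow> real) \<Rightarrow> nat \<Rightarrow> nat \<Rightarrow> real" where
  "Ksum a k l = (\<Sum>j\<in>{k<..l}. \<bar>a j\<bar>)"

definition mrad :: "(nat \<Rightarrow> real) \<Rightarrow> nat \<Rightarrow> nat \<Rightarrow> real" where
  "mrad a k l = min 1 (sqrt (\<bar>a k\<bar> / (2 * (Ksum a k l + 1))))"

lemma Ksum_nonneg: "Ksum a k l \<ge> 0"
  unfolding Ksum_def by (simp add: sum_nonneg)

lemma mrad_pos: "a k \<noteq> 0 \<Longrightarrow> mrad a k l > 0"
  unfolding mrad_def using Ksum_nonneg[of a k l] by (auto intro!: divide_pos_pos)

lemma mrad_le1: "mrad a k l \<le> 1"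
  unfolding mrad_def by simp

lemma W_near:
  assumes "k \<le> l" "0 \<le> x" "x \<le> mrad a k l"
  shows "\<bar>Wpol a k l x - a k\<bar> \<le> Ksum a k l * x^2" "Ksum a k l * x^2 \<le> \<bar>a k\<bar> / 2"
proof -
  have x1: "\<bar>x\<bar> \<le> 1" using assms mrad_le1[of a k l] by auto
  show "\<bar>Wpol a k l x - a k\<bar> \<le> Ksum a k l * x^2" unfolding Ksum_def by (rule Wpol_bound[OF assms(1) x1])
  have K0: "Ksum a k l \<ge> 0" by (rule Ksum_nonneg)
  have "x \<le> sqrt (\<bar>a k\<bar> / (2 * (Ksum a k l + 1)))" using assms(3) unfolding mrad_def by simp
  then have "x^2 \<le> (sqrt (\<bar>a k\<bar> / (2 * (Ksum a k l + 1))))^2" by (rule power_mono[OF _ assms(2)])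
  also have "\<dots> = \<bar>a k\<bar> / (2 * (Ksum a k l + 1))" using K0 by (intro real_sqrt_pow2) simp
  finally have "x^2 \<le> \<bar>a k\<bar> / (2 * (Ksum a k l + 1))" .
  then have "(Ksum a k l + 1) * x^2 \<le> \<bar>a k\<bar> / 2" using K0 by (simp add: field_simps)
  moreover have "Ksum a k l * x^2 \<le> (Ksum a k l + 1) * x^2" by (simp add: mult_right_mono)
  ultimately show "Ksum a k l * x^2 \<le> \<bar>a k\<bar> / 2" by linarith
qed

lemma W_sign:
  assumes "k \<le> l" "0 \<le> x" "x \<le> mrad a k l"
  shows "a k > 0 \<Longrightarrow> Wpol a k l x \<ge> a k / 2" "a k < 0 \<Longrightarrow> Wpol a k l x \<le> a k / 2"
    "\<bar>Wpol a k l x\<bar> \<le> 3 / 2 * \<bar>a k\<bar>"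
  using W_near[OF assms] by (auto simp: abs_if split: if_splits)

lemma ode_sign:
  fixes r :: "real \<Rightarrow> real"
  assumes kl: "k \<le> l" and az: "\<forall>j<k. a j = 0" and ak: "a k \<noteq> 0"
    and pos: "\<And>\<phi>. \<phi> \<ge> \<phi>0 \<Longrightarrow> r \<phi> > 0"
    and der: "\<And>\<phi>. \<phi> \<ge> \<phi>0 \<Longrightarrow> (r has_real_derivative r \<phi> * Spol a l (r \<phi>)) (at \<phi> within {\<phi>0..})"
    and small: "\<And>\<delta>. \<delta> > 0 \<Longrightarrow> \<exists>\<phi>\<ge>\<phi>0. r \<phi> < \<delta>"
  shows "a k < 0 \<and> (\<exists>\<phi>1\<ge>\<phi>0. \<forall>\<phi>\<ge>\<phi>1. r \<phi> \<le> mrad a k l)"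
proof -
  define m where "m = mrad a k l"
  have m: "m > 0" "m \<le> 1" using mrad_pos[of a k l, OF ak] mrad_le1 by (auto simp: m_def)
  have derat: "(r has_real_derivative r \<phi> ^ (2 * k + 1) * Wpol a k l (r \<phi>)) (at \<phi>)" if "\<phi> > \<phi>0" for \<phi>
  proof -
    have "(r has_real_derivative r \<phi> * Spol a l (r \<phi>)) (at \<phi>)"
      using der[of \<phi>] that at_within_interior[of \<phi> "{\<phi>0..}"] by auto
    then show ?thesis using Spol_eq[OF kl az] by (simp add: algebra_simps)
  qed
  have cont: "continuous_on {\<phi>0..} r" by (rule DERIV_continuous_on[OF der]) auto
  have contI: "continuous_on {x..y} r" if "x \<ge> \<phi>0" for x y by (rule continuous_on_subset[OF cont]) (use that in auto)
  have "a k < 0"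
  proof (rule ccontr)
    assume "\<not> a k < 0"
    then have akp: "a k > 0" using ak by simp
    define \<mu> where "\<mu> = min (r \<phi>0) m"
    have \<mu>: "\<mu> > 0" using pos[of \<phi>0] m by (simp add: \<mu>_def)
    have "r x \<ge> \<mu>" if "x \<ge> \<phi>0" for x
    proof (rule barrier_down[of \<phi>0 x r "\<lambda>\<phi>. r \<phi> ^ (2 * k + 1) * Wpol a k l (r \<phi>)" \<mu> 0])
      fix y assume y: "\<phi>0 < y" "y < x" "0 < r y" "r y < \<mu>"
      have "Wpol a k l (r y) \<ge> a k / 2" using W_sign(1)[OF kl, of "r y"] y akp \<mu>_def m_def by auto
      then show "0 \<le> r y ^ (2 * k + 1) * Wpol a k l (r y)" using y akp by (intro mult_nonneg_nonneg) auto
    qed (use that contI derat \<mu> in \<open>auto simp: \<mu>_def\<close>)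
    then show False using small[OF \<mu>] by (meson not_le)
  qed
  moreover obtain \<phi>1 where \<phi>1: "\<phi>1 \<ge> \<phi>0" "r \<phi>1 < m" using small[OF m(1)] by blast
  have "r x \<le> r \<phi>1" if "x \<ge> \<phi>1" for x
  proof (rule barrier_up[of \<phi>1 x r "\<lambda>\<phi>. r \<phi> ^ (2 * k + 1) * Wpol a k l (r \<phi>)" "r \<phi>1" m])
    fix y assume y: "\<phi>1 < y" "y < x" "r \<phi>1 < r y" "r y < m"
    have "y > \<phi>0" using y \<phi>1 by simp
    then have "0 < r y" using pos by simp
    then have "Wpol a k l (r y) \<le> a k / 2" using W_sign(2)[OF kl, of "r y"] y \<open>a k < 0\<close> m_def by auto
    then show "r y ^ (2 * k + 1) * Wpol a k l (r y) \<le> 0" using \<open>0 < r y\<close> \<open>a k < 0\<close>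
      by (intro mult_nonneg_nonpos) auto
  qed (use that contI derat \<phi>1 in auto)
  then have "\<forall>\<phi>\<ge>\<phi>1. r \<phi> \<le> m" using \<phi>1 by force
  ultimately show ?thesis using \<phi>1 by (auto simp: m_def)
qed

lemma incr_from_deriv:
  fixes f f' :: "real \<Rightarrow> real"
  assumes "a \<le> b" "continuous_on {a..b} f"
    "\<And>x. a < x \<Longrightarrow> x < b \<Longrightarrow> (f has_real_derivative f' x) (at x)"
    "\<And>x. a < x \<Longrightarrow> x < b \<Longrightarrow> f' x \<ge> 0"
  shows "f a \<le> f b"
  by (rule DERIV_nonneg_imp_increasing_open[OF assms(1) _ assms(2)]) (use assms(3,4) in blast)

lemma ode_kpos:
  fixes r w :: "real \<Rightarrow> real" and k :: nat and b \<phi>1 \<phi> :: real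
  assumes k: "k \<ge> 1" and b: "b > 0"
    and cont: "continuous_on {\<phi>1..} r" and pos: "\<And>\<phi>. \<phi> \<ge> \<phi>1 \<Longrightarrow> r \<phi> > 0"
    and der: "\<And>\<phi>. \<phi> > \<phi>1 \<Longrightarrow> (r has_real_derivative r \<phi> ^ (2 * k + 1) * w \<phi>) (at \<phi>)"
    and wb: "\<And>\<phi>. \<phi> > \<phi>1 \<Longrightarrow> - 3 * b / 2 \<le> w \<phi> \<and> w \<phi> \<le> - b / 2"
    and \<phi>: "\<phi> \<ge> \<phi>1"
  shows "inverse (r \<phi>1) ^ (2 * k) + real k * b * (\<phi> - \<phi>1) \<le> inverse (r \<phi>) ^ (2 * k)
       \<and> inverse (r \<phi>) ^ (2 * k) \<le> inverse (r \<phi>1) ^ (2 * k) + 3 * real k * b * (\<phi> - \<phi>1)"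
proof -
  define v where "v x = inverse (r x) ^ (2 * k)" for x
  have vder: "(v has_real_derivative (- 2 * real k * w x)) (at x)" if x: "x > \<phi>1" for x
  proof -
    have rx: "r x > 0" using pos x by simp
    have rx0: "r x \<noteq> 0" using rx by simp
    define N where "N = 2 * k - Suc 0"
    have n: "2 * k + 1 = N + Suc (Suc 0)" using k by (simp add: N_def)
    have pw: "r x ^ (2 * k + 1) = r x ^ N * r x ^ Suc (Suc 0)" unfolding n by (rule power_add)
    note d1 = DERIV_power[OF DERIV_inverse_fun[OF der[OF x] rx0], of "2 * k"]
    have i1: "r x ^ N * inverse (r x) ^ N = 1" using rx0 by (simp add: power_mult_distrib[symmetric])
    have i2: "r x ^ Suc (Suc 0) * inverse (r x ^ Suc (Suc 0)) = 1" using rx0 by (rule right_inverse[OF power_not_zero])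
    have "r x ^ (2 * k + 1) * w x * inverse (r x ^ Suc (Suc 0)) * inverse (r x) ^ N
        = w x * (r x ^ N * inverse (r x) ^ N) * (r x ^ Suc (Suc 0) * inverse (r x ^ Suc (Suc 0)))"
      unfolding pw by (simp only: mult_ac)
    then have "r x ^ (2 * k + 1) * w x * inverse (r x ^ Suc (Suc 0)) * inverse (r x) ^ N = w x"
      unfolding i1 i2 by simp
    then have eq: "of_nat (2 * k) * (- (r x ^ (2 * k + 1) * w x * inverse (r x ^ Suc (Suc 0))) * inverse (r x) ^ (2 * k - Suc 0))
        = - 2 * real k * w x"
      unfolding N_def[symmetric] by (simp add: algebra_simps)
    show ?thesis unfolding v_def by (rule DERIV_cong[OF d1 eq])
  qed
  have vcont: "continuous_on {\<phi>1..\<phi>} v" unfolding v_def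
    by (intro continuous_intros continuous_on_subset[OF cont]) (use pos in \<open>auto simp: less_le\<close>)
  have 1: "(\<lambda>x. v x - real k * b * x) \<phi>1 \<le> (\<lambda>x. v x - real k * b * x) \<phi>"
  proof (rule incr_from_deriv[OF \<phi>])
    show "continuous_on {\<phi>1..\<phi>} (\<lambda>x. v x - real k * b * x)" by (intro continuous_intros vcont)
    show "((\<lambda>x. v x - real k * b * x) has_real_derivative (- 2 * real k * w x - real k * b)) (at x)" if "\<phi>1 < x" "x < \<phi>" for x
      using vder[OF that(1)] by (auto intro!: derivative_eq_intros)
    show "0 \<le> - 2 * real k * w x - real k * b" if "\<phi>1 < x" "x < \<phi>" for x
    proof -
      have "0 \<le> real k * (- 2 * w x - b)" using wb[OF that(1)] by (intro mult_nonneg_nonneg) auto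
      then show ?thesis by (simp add: algebra_simps)
    qed
  qed
  have 2: "(\<lambda>x. 3 * real k * b * x - v x) \<phi>1 \<le> (\<lambda>x. 3 * real k * b * x - v x) \<phi>"
  proof (rule incr_from_deriv[OF \<phi>])
    show "continuous_on {\<phi>1..\<phi>} (\<lambda>x. 3 * real k * b * x - v x)" by (intro continuous_intros vcont)
    show "((\<lambda>x. 3 * real k * b * x - v x) has_real_derivative (3 * real k * b + 2 * real k * w x)) (at x)" if "\<phi>1 < x" "x < \<phi>" for x
      using vder[OF that(1)] by (auto intro!: derivative_eq_intros)
    show "0 \<le> 3 * real k * b + 2 * real k * w x" if "\<phi>1 < x" "x < \<phi>" for x
    proof -
      have "0 \<le> real k * (3 * b + 2 * w x)" using wb[OF that(1)] by (intro mult_nonneg_nonneg) auto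
      then show ?thesis by (simp add: algebra_simps)
    qed
  qed
  from 1 2 show ?thesis unfolding v_def by (simp add: algebra_simps)
qed

lemma ode_k0:
  fixes r w :: "real \<Rightarrow> real" and b K \<phi>1 :: real
  assumes b: "b > 0" and K: "K \<ge> 0"
    and cont: "continuous_on {\<phi>1..} r" and pos: "\<And>\<phi>. \<phi> \<ge> \<phi>1 \<Longrightarrow> r \<phi> > 0"
    and der: "\<And>\<phi>. \<phi> > \<phi>1 \<Longrightarrow> (r has_real_derivative r \<phi> * w \<phi>) (at \<phi>)"
    and wb: "\<And>\<phi>. \<phi> > \<phi>1 \<Longrightarrow> w \<phi> \<le> - b / 2"
    and wK: "\<And>\<phi>. \<phi> > \<phi>1 \<Longrightarrow> \<bar>w \<phi> + b\<bar> \<le> K * (r \<phi>)^2"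
  shows "\<exists>c1>0. \<exists>c2>0. \<forall>\<phi>\<ge>\<phi>1. c1 * exp (b * \<phi>) \<le> inverse (r \<phi>) \<and> inverse (r \<phi>) \<le> c2 * exp (b * \<phi>)"
proof -
  define v where "v x = - ln (r x)" for x
  have vder: "(v has_real_derivative - w x) (at x)" if x: "x > \<phi>1" for x
  proof -
    have rx: "r x > 0" using pos x by simp
    have "((\<lambda>x. ln (r x)) has_real_derivative (1 / r x) * (r x * w x)) (at x)"
      by (rule DERIV_chain2[OF DERIV_ln_divide[OF rx] der[OF x]])
    then have "((\<lambda>x. - ln (r x)) has_real_derivative - ((1 / r x) * (r x * w x))) (at x)"
      by (rule derivative_intros)
    moreover have "- ((1 / r x) * (r x * w x)) = - w x" using rx by simp
    ultimately show ?thesis unfolding v_def by simp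
  qed
  have vcont: "continuous_on {\<phi>1..\<phi>} v" for \<phi> unfolding v_def
    by (intro continuous_intros continuous_on_subset[OF cont]) (use pos in \<open>auto simp: less_le\<close>)
  have vr: "inverse (r x) = exp (v x)" if "x \<ge> \<phi>1" for x
    using pos[OF that] by (simp add: v_def exp_minus)
  have st1: "v \<phi>1 + b / 2 * (\<phi> - \<phi>1) \<le> v \<phi>" if \<phi>: "\<phi> \<ge> \<phi>1" for \<phi>
  proof -
    have "(\<lambda>x. v x - b / 2 * x) \<phi>1 \<le> (\<lambda>x. v x - b / 2 * x) \<phi>"
    proof (rule incr_from_deriv[OF \<phi>])
      show "continuous_on {\<phi>1..\<phi>} (\<lambda>x. v x - b / 2 * x)" by (intro continuous_intros vcont)
      show "((\<lambda>x. v x - b / 2 * x) has_real_derivative (- w x - b / 2)) (at x)" if "\<phi>1 < x" "x < \<phi>" for x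
        using vder[OF that(1)] by (auto intro!: derivative_eq_intros)
      show "0 \<le> - w x - b / 2" if "\<phi>1 < x" "x < \<phi>" for x using wb[OF that(1)] by simp
    qed
    then show ?thesis by (simp add: algebra_simps diff_divide_distrib)
  qed
  define D where "D = K * (r \<phi>1)^2"
  have D: "D \<ge> 0" using K by (simp add: D_def)
  have r2: "K * (r x)^2 \<le> D * exp (- b * (x - \<phi>1))" if x: "x \<ge> \<phi>1" for x
  proof -
    have "r x = exp (- v x)" using pos[OF x] by (simp add: v_def)
    also have "\<dots> \<le> exp (- v \<phi>1 - b / 2 * (x - \<phi>1))" using st1[OF x] by simp
    also have "\<dots> = exp (ln (r \<phi>1)) * exp (- b / 2 * (x - \<phi>1))"
      unfolding exp_add[symmetric] by (simp add: v_def)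
    also have "\<dots> = r \<phi>1 * exp (- b / 2 * (x - \<phi>1))" using pos[of \<phi>1] by simp
    finally have "r x \<le> r \<phi>1 * exp (- b / 2 * (x - \<phi>1))" .
    then have "(r x)^2 \<le> (r \<phi>1 * exp (- b / 2 * (x - \<phi>1)))^2"
      using pos[OF x] by (intro power_mono) auto
    also have "\<dots> = (r \<phi>1)^2 * exp (- b * (x - \<phi>1))"
      by (simp add: power_mult_distrib power2_eq_square exp_add[symmetric])
    finally show ?thesis unfolding D_def using K by (simp add: mult_left_mono mult.assoc)
  qed
  define c0 where "c0 = v \<phi>1 - b * \<phi>1"
  have up: "v \<phi> - b * \<phi> \<le> c0 + D / b" if \<phi>: "\<phi> \<ge> \<phi>1" for \<phi>
  proof -
    define h where "h x = b * x - v x - D / b * exp (- b * (x - \<phi>1))" for x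
    have "h \<phi>1 \<le> h \<phi>"
    proof (rule incr_from_deriv[OF \<phi>])
      show "continuous_on {\<phi>1..\<phi>} h" unfolding h_def by (intro continuous_intros vcont)
      show "(h has_real_derivative (b + w x + D * exp (- b * (x - \<phi>1)))) (at x)" if "\<phi>1 < x" "x < \<phi>" for x
        unfolding h_def using vder[OF that(1)] b by (auto intro!: derivative_eq_intros simp: field_simps)
      show "0 \<le> b + w x + D * exp (- b * (x - \<phi>1))" if "\<phi>1 < x" "x < \<phi>" for x
        using wK[OF that(1)] r2[of x] that by (simp add: abs_le_iff)
    qed
    moreover have "0 \<le> D / b * exp (- b * (\<phi> - \<phi>1))" using D b by simp
    ultimately show ?thesis by (simp add: h_def c0_def)
  qed
  have lo: "c0 - D / b \<le> v \<phi> - b * \<phi>" if \<phi>: "\<phi> \<ge> \<phi>1" for \<phi>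
  proof -
    define h where "h x = v x - b * x - D / b * exp (- b * (x - \<phi>1))" for x
    have "h \<phi>1 \<le> h \<phi>"
    proof (rule incr_from_deriv[OF \<phi>])
      show "continuous_on {\<phi>1..\<phi>} h" unfolding h_def by (intro continuous_intros vcont)
      show "(h has_real_derivative (- w x - b + D * exp (- b * (x - \<phi>1)))) (at x)" if "\<phi>1 < x" "x < \<phi>" for x
        unfolding h_def using vder[OF that(1)] b by (auto intro!: derivative_eq_intros simp: field_simps)
      show "0 \<le> - w x - b + D * exp (- b * (x - \<phi>1))" if "\<phi>1 < x" "x < \<phi>" for x
        using wK[OF that(1)] r2[of x] that by (simp add: abs_le_iff)
    qed
    moreover have "0 \<le> D / b * exp (- b * (\<phi> - \<phi>1))" using D b by simp
    ultimately show ?thesis by (simp add: h_def c0_def)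
  qed
  show ?thesis
  proof (intro exI conjI allI impI)
    show "exp (c0 - D / b) > 0" "exp (c0 + D / b) > 0" by simp_all
    fix \<phi> assume \<phi>: "\<phi> \<ge> \<phi>1"
    have e: "inverse (r \<phi>) = exp (v \<phi> - b * \<phi>) * exp (b * \<phi>)" using vr[OF \<phi>] by (simp add: exp_diff)
    show "exp (c0 - D / b) * exp (b * \<phi>) \<le> inverse (r \<phi>)" unfolding e using lo[OF \<phi>] by simp
    show "inverse (r \<phi>) \<le> exp (c0 + D / b) * exp (b * \<phi>)" unfolding e using up[OF \<phi>] by simp
  qed
qed

lemma Spol_bound:
  assumes "\<bar>x\<bar> \<le> R"
  shows "\<bar>Spol a l x\<bar> \<le> (\<Sum>j\<le>l. \<bar>a j\<bar> * (max 1 R) ^ (2 * j))"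
  unfolding Spol_def
proof (rule order.trans[OF sum_abs sum_mono])
  fix j assume "j \<in> {..l}"
  have "\<bar>x\<bar> ^ (2 * j) \<le> (max 1 R) ^ (2 * j)" using assms by (intro power_mono) auto
  then show "\<bar>a j * x ^ (2 * j)\<bar> \<le> \<bar>a j\<bar> * max 1 R ^ (2 * j)"
    by (simp add: abs_mult power_abs mult_left_mono)
qed

lemma core_prelim:
  fixes l k :: nat and a :: "nat \<Rightarrow> real" and r :: "real \<Rightarrow> real" and \<phi>0 R :: real
  defines "\<gamma> \<equiv> (\<lambda>\<phi>. complex_of_real (r \<phi>) * cis \<phi>)"
  assumes pos: "\<And>\<phi>. \<phi> \<ge> \<phi>0 \<Longrightarrow> r \<phi> > 0"
    and Rb: "\<And>\<phi>. \<phi> \<ge> \<phi>0 \<Longrightarrow> r \<phi> \<le> R"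
    and der: "\<And>\<phi>. \<phi> \<ge> \<phi>0 \<Longrightarrow> (r has_real_derivative r \<phi> * Spol a l (r \<phi>)) (at \<phi> within {\<phi>0..})"
  shows "\<exists>L>0. \<forall>x y. x \<ge> \<phi>0 \<longrightarrow> y \<ge> \<phi>0 \<longrightarrow> dist (\<gamma> x) (\<gamma> y) \<le> L * \<bar>x - y\<bar>"
    and "bounded (\<gamma> ` {\<phi>0..})"
    and "continuous_on {\<phi>0..} r"
proof -
  have R0: "R > 0" using pos[of \<phi>0] Rb[of \<phi>0] by simp
  define P where "P = (\<Sum>j\<le>l. \<bar>a j\<bar> * (max 1 R) ^ (2 * j))"
  have P: "P \<ge> 0" unfolding P_def by (intro sum_nonneg) auto
  show "\<exists>L>0. \<forall>x y. x \<ge> \<phi>0 \<longrightarrow> y \<ge> \<phi>0 \<longrightarrow> dist (\<gamma> x) (\<gamma> y) \<le> L * \<bar>x - y\<bar>"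
  proof (intro exI[of _ "R * P + R"] conjI allI impI)
    show "R * P + R > 0" using R0 P by (simp add: add_nonneg_pos)
    fix x y assume xy: "x \<ge> \<phi>0" "y \<ge> \<phi>0"
    show "dist (\<gamma> x) (\<gamma> y) \<le> (R * P + R) * \<bar>x - y\<bar>" unfolding \<gamma>_def
    proof (rule gamma_lip[OF der _ _ xy])
      fix \<phi> :: real assume \<phi>: "\<phi> \<ge> \<phi>0"
      show "\<bar>r \<phi>\<bar> \<le> R" using pos[OF \<phi>] Rb[OF \<phi>] by simp
      have "\<bar>Spol a l (r \<phi>)\<bar> \<le> P" unfolding P_def using pos[OF \<phi>] Rb[OF \<phi>] by (intro Spol_bound) auto
      then show "\<bar>r \<phi> * Spol a l (r \<phi>)\<bar> \<le> R * P"
        using pos[OF \<phi>] Rb[OF \<phi>] P by (simp add: abs_mult mult_mono)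
    qed
  qed
  have "norm z \<le> R" if zin: "z \<in> \<gamma> ` {\<phi>0..}" for z
  proof -
    obtain \<phi> where \<phi>: "\<phi> \<ge> \<phi>0" "z = \<gamma> \<phi>" using zin by auto
    then have "norm z = r \<phi>" using pos[OF \<phi>(1)] by (simp add: \<gamma>_def norm_mult)
    then show ?thesis using Rb[OF \<phi>(1)] by simp
  qed
  then show "bounded (\<gamma> ` {\<phi>0..})" unfolding bounded_iff by blast
  show "continuous_on {\<phi>0..} r" by (rule DERIV_continuous_on[OF der]) auto
qed

lemma core_k0:
  fixes l :: nat and a :: "nat \<Rightarrow> real" and r :: "real \<Rightarrow> real" and \<phi>0 R :: real
  defines "\<gamma> \<equiv> (\<lambda>\<phi>. complex_of_real (r \<phi>) * cis \<phi>)"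
  assumes a0: "a 0 \<noteq> 0"
    and pos: "\<And>\<phi>. \<phi> \<ge> \<phi>0 \<Longrightarrow> r \<phi> > 0"
    and Rb: "\<And>\<phi>. \<phi> \<ge> \<phi>0 \<Longrightarrow> r \<phi> \<le> R"
    and der: "\<And>\<phi>. \<phi> \<ge> \<phi>0 \<Longrightarrow> (r has_real_derivative r \<phi> * Spol a l (r \<phi>)) (at \<phi> within {\<phi>0..})"
    and small: "\<And>\<delta>. \<delta> > 0 \<Longrightarrow> \<exists>\<phi>\<ge>\<phi>0. r \<phi> < \<delta>"
  shows "comparable (\<lambda>\<phi>. inverse (r \<phi>)) (\<lambda>\<phi>. exp (- a 0 * \<phi>)) at_top
     \<and> lower_box_dim (\<gamma> ` {\<phi>0..}) = 1 \<and> upper_box_dim (\<gamma> ` {\<phi>0..}) = 1"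
proof -
  have kl: "(0::nat) \<le> l" and az: "\<forall>j<0. a j = 0" by auto
  obtain \<phi>1 where a0n: "a 0 < 0" and \<phi>1: "\<phi>1 \<ge> \<phi>0" and rm: "\<And>\<phi>. \<phi> \<ge> \<phi>1 \<Longrightarrow> r \<phi> \<le> mrad a 0 l"
    using ode_sign[OF kl az a0 pos der small] by blast
  define b where "b = - a 0"
  have b: "b > 0" using a0n by (simp add: b_def)
  obtain L where L: "L > 0" and lip: "\<And>x y. x \<ge> \<phi>0 \<Longrightarrow> y \<ge> \<phi>0 \<Longrightarrow> dist (\<gamma> x) (\<gamma> y) \<le> L * \<bar>x - y\<bar>"
    using core_prelim(1)[OF pos Rb der] unfolding \<gamma>_def by blast
  have bdd: "bounded (\<gamma> ` {\<phi>0..})" and cont: "continuous_on {\<phi>0..} r"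
    using core_prelim(2,3)[OF pos Rb der] unfolding \<gamma>_def by blast+
  have derat: "(r has_real_derivative r \<phi> * Wpol a 0 l (r \<phi>)) (at \<phi>)" if "\<phi> > \<phi>0" for \<phi>
  proof -
    have "(r has_real_derivative r \<phi> * Spol a l (r \<phi>)) (at \<phi>)"
      using der[of \<phi>] that at_within_interior[of \<phi> "{\<phi>0..}"] by auto
    then show ?thesis using Spol_eq[OF kl az] by simp
  qed
  have Wb: "Wpol a 0 l (r \<phi>) \<le> - b / 2" "\<bar>Wpol a 0 l (r \<phi>) + b\<bar> \<le> Ksum a 0 l * (r \<phi>)^2" if "\<phi> > \<phi>1" for \<phi>
  proof -
    have r: "0 \<le> r \<phi>" "r \<phi> \<le> mrad a 0 l" using pos[of \<phi>] rm[of \<phi>] that \<phi>1 by auto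
    show "Wpol a 0 l (r \<phi>) \<le> - b / 2" using W_sign(2)[OF kl r] a0n by (simp add: b_def)
    show "\<bar>Wpol a 0 l (r \<phi>) + b\<bar> \<le> Ksum a 0 l * (r \<phi>)^2" using W_near(1)[OF kl r] by (simp add: b_def)
  qed
  obtain c1 c2 where c1: "c1 > 0" and c2: "c2 > 0"
    and cb: "\<And>\<phi>. \<phi> \<ge> \<phi>1 \<Longrightarrow> c1 * exp (b * \<phi>) \<le> inverse (r \<phi>) \<and> inverse (r \<phi>) \<le> c2 * exp (b * \<phi>)"
  proof -
    have "\<exists>c1>0. \<exists>c2>0. \<forall>\<phi>\<ge>\<phi>1. c1 * exp (b * \<phi>) \<le> inverse (r \<phi>) \<and> inverse (r \<phi>) \<le> c2 * exp (b * \<phi>)"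
    proof (rule ode_k0[OF b Ksum_nonneg])
      show "continuous_on {\<phi>1..} r" by (rule continuous_on_subset[OF cont]) (use \<phi>1 in auto)
      show "\<And>\<phi>. \<phi>1 \<le> \<phi> \<Longrightarrow> 0 < r \<phi>" using pos \<phi>1 by auto
      show "\<And>\<phi>. \<phi>1 < \<phi> \<Longrightarrow> (r has_real_derivative r \<phi> * Wpol a 0 l (r \<phi>)) (at \<phi>)" using derat \<phi>1 by auto
    qed (use Wb in auto)
    then show ?thesis using that by blast
  qed
  have comp: "comparable (\<lambda>\<phi>. inverse (r \<phi>)) (\<lambda>\<phi>. exp (- a 0 * \<phi>)) at_top"
    unfolding comparable_def
    by (intro exI[of _ c1] exI[of _ c2] conjI c1 c2 eventually_at_top_linorderI[of \<phi>1])
       (use cb in \<open>auto simp: b_def\<close>)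
  have dec: "r \<phi> \<le> (1 / c1) * exp (- b * \<phi>)" if "\<phi> \<ge> \<phi>1" for \<phi>
  proof -
    have "c1 * exp (b * \<phi>) \<le> inverse (r \<phi>)" using cb[OF that] by simp
    then have "r \<phi> \<le> inverse (c1 * exp (b * \<phi>))" using pos[of \<phi>] that \<phi>1 c1
      by (metis inverse_inverse_eq le_imp_inverse_le mult_pos_pos exp_gt_zero order.trans)
    then show ?thesis by (simp add: exp_minus field_simps)
  qed
  have lim: "(r \<longlongrightarrow> 0) at_top"
  proof (rule tendsto_sandwich[of "\<lambda>_. 0" _ _ "\<lambda>\<phi>. (1 / c1) * exp (- b * \<phi>)"])
    show "eventually (\<lambda>\<phi>. 0 \<le> r \<phi>) at_top"
      using eventually_ge_at_top[of \<phi>0] by eventually_elim (use pos in \<open>auto intro: less_imp_le\<close>)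
    show "eventually (\<lambda>\<phi>. r \<phi> \<le> (1 / c1) * exp (- b * \<phi>)) at_top"
      using eventually_ge_at_top[of \<phi>1] by eventually_elim (use dec in auto)
    show "((\<lambda>\<phi>. (1 / c1) * exp (- b * \<phi>)) \<longlongrightarrow> 0) at_top" using b by real_asymp
  qed simp
  have "lower_box_dim (\<gamma> ` {\<phi>0..}) = 1 \<and> upper_box_dim (\<gamma> ` {\<phi>0..}) = 1"
    unfolding \<gamma>_def
    by (rule geoA[OF L lip[unfolded \<gamma>_def] pos cont lim b _ dec bdd[unfolded \<gamma>_def]]) (use c1 in auto)
  with comp show ?thesis by blast
qed

lemma pow_powr_inv: "x > 0 \<Longrightarrow> n > 0 \<Longrightarrow> (x ^ n) powr (1 / real n) = (x::real)"
  by (simp add: powr_realpow[symmetric] powr_powr)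

lemma core_kpos:
  fixes l k :: nat and a :: "nat \<Rightarrow> real" and r :: "real \<Rightarrow> real" and \<phi>0 R :: real
  defines "\<gamma> \<equiv> (\<lambda>\<phi>. complex_of_real (r \<phi>) * cis \<phi>)"
  assumes k1: "1 \<le> k" and kl: "k \<le> l" and az: "\<forall>j<k. a j = 0" and ak: "a k \<noteq> 0"
    and pos: "\<And>\<phi>. \<phi> \<ge> \<phi>0 \<Longrightarrow> r \<phi> > 0"
    and Rb: "\<And>\<phi>. \<phi> \<ge> \<phi>0 \<Longrightarrow> r \<phi> \<le> R"
    and der: "\<And>\<phi>. \<phi> \<ge> \<phi>0 \<Longrightarrow> (r has_real_derivative r \<phi> * Spol a l (r \<phi>)) (at \<phi> within {\<phi>0..})"
    and small: "\<And>\<delta>. \<delta> > 0 \<Longrightarrow> \<exists>\<phi>\<ge>\<phi>0. r \<phi> < \<delta>"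
  shows "comparable (\<lambda>\<phi>. inverse (r \<phi>)) (\<lambda>\<phi>. \<bar>\<phi>\<bar> powr (1 / (2 * real k))) at_top
     \<and> lower_box_dim (\<gamma> ` {\<phi>0..}) = 4 * real k / (2 * real k + 1)
     \<and> upper_box_dim (\<gamma> ` {\<phi>0..}) = 4 * real k / (2 * real k + 1)"
proof -
  obtain \<phi>1 where akn: "a k < 0" and \<phi>1: "\<phi>1 \<ge> \<phi>0" and rm: "\<And>\<phi>. \<phi> \<ge> \<phi>1 \<Longrightarrow> r \<phi> \<le> mrad a k l"
    using ode_sign[OF kl az ak pos der small] by blast
  define b where "b = - a k"
  have b: "b > 0" using akn by (simp add: b_def)
  obtain L where L: "L > 0" and lip: "\<And>x y. x \<ge> \<phi>0 \<Longrightarrow> y \<ge> \<phi>0 \<Longrightarrow> dist (\<gamma> x) (\<gamma> y) \<le> L * \<bar>x - y\<bar>"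
    using core_prelim(1)[OF pos Rb der] unfolding \<gamma>_def by blast
  have bdd: "bounded (\<gamma> ` {\<phi>0..})" and cont: "continuous_on {\<phi>0..} r"
    using core_prelim(2,3)[OF pos Rb der] unfolding \<gamma>_def by blast+
  define W where "W \<phi> = Wpol a k l (r \<phi>)" for \<phi>
  have derat: "(r has_real_derivative r \<phi> ^ (2 * k + 1) * W \<phi>) (at \<phi>)" if "\<phi> > \<phi>0" for \<phi>
  proof -
    have "(r has_real_derivative r \<phi> * Spol a l (r \<phi>)) (at \<phi>)"
      using der[of \<phi>] that at_within_interior[of \<phi> "{\<phi>0..}"] by auto
    then show ?thesis using Spol_eq[OF kl az] by (simp add: W_def algebra_simps)
  qed
  have Wb: "- 3 * b / 2 \<le> W \<phi> \<and> W \<phi> \<le> - b / 2" if "\<phi> > \<phi>1" for \<phi>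
  proof -
    have r: "0 \<le> r \<phi>" "r \<phi> \<le> mrad a k l" using pos[of \<phi>] rm[of \<phi>] that \<phi>1 by auto
    show ?thesis using W_sign(2,3)[OF kl r] akn by (auto simp: b_def W_def)
  qed
  define v where "v \<phi> = inverse (r \<phi>) ^ (2 * k)" for \<phi>
  have vb: "v \<phi>1 + real k * b * (\<phi> - \<phi>1) \<le> v \<phi> \<and> v \<phi> \<le> v \<phi>1 + 3 * real k * b * (\<phi> - \<phi>1)"
    if "\<phi> \<ge> \<phi>1" for \<phi>
    unfolding v_def
  proof (rule ode_kpos[OF k1 b _ _ _ _ that])
    show "continuous_on {\<phi>1..} r" by (rule continuous_on_subset[OF cont]) (use \<phi>1 in auto)
    show "\<And>\<phi>. \<phi>1 \<le> \<phi> \<Longrightarrow> 0 < r \<phi>" using pos \<phi>1 by auto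
    show "\<And>\<phi>. \<phi>1 < \<phi> \<Longrightarrow> (r has_real_derivative r \<phi> ^ (2 * k + 1) * W \<phi>) (at \<phi>)" using derat \<phi>1 by auto
  qed (use Wb in auto)
  have V1: "v \<phi>1 \<ge> 0" by (simp add: v_def)
  define A where "A = real k * b / 2"
  define B where "B = v \<phi>1 + 3 * real k * b * \<bar>\<phi>1\<bar> + 3 * real k * b"
  have A: "A > 0" using b k1 by (simp add: A_def)
  have B: "B > 0" using b k1 V1 by (simp add: B_def add_nonneg_pos)
  define T where "T = max 1 (2 * \<bar>\<phi>1\<bar>) + 1"
  have T: "T \<ge> 1" "T > \<phi>1" "T > \<phi>0" using \<phi>1 by (auto simp: T_def)
  have vAB: "A * \<phi> \<le> v \<phi> \<and> v \<phi> \<le> B * \<phi>" if \<phi>: "\<phi> \<ge> T" for \<phi>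
  proof -
    have p1: "\<phi> \<ge> 1" "\<phi> \<ge> 2 * \<bar>\<phi>1\<bar>" using \<phi> by (auto simp: T_def)
    have vb': "v \<phi>1 + real k * b * (\<phi> - \<phi>1) \<le> v \<phi>" "v \<phi> \<le> v \<phi>1 + 3 * real k * b * (\<phi> - \<phi>1)"
      using vb[of \<phi>] \<phi> T by auto
    have kb: "real k * b > 0" using k1 b by simp
    have "\<phi> / 2 \<le> \<phi> - \<phi>1" using p1 abs_ge_self[of \<phi>1] by linarith
    then have "real k * b * (\<phi> / 2) \<le> real k * b * (\<phi> - \<phi>1)" using kb by (intro mult_left_mono) auto
    then have "A * \<phi> \<le> real k * b * (\<phi> - \<phi>1)" unfolding A_def by (simp add: algebra_simps)
    then have lo: "A * \<phi> \<le> v \<phi>" using vb'(1) V1 by linarith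
    have "3 * real k * b * (\<phi> - \<phi>1) \<le> 3 * real k * b * (\<bar>\<phi>1\<bar> + \<phi>)"
      using kb abs_ge_minus_self[of \<phi>1] by (intro mult_left_mono) (auto simp: mult.commute)
    then have "v \<phi>1 + 3 * real k * b * (\<phi> - \<phi>1) \<le> v \<phi>1 + 3 * real k * b * \<bar>\<phi>1\<bar> + 3 * real k * b * \<phi>"
      by (simp add: algebra_simps)
    also have "\<dots> \<le> (v \<phi>1 + 3 * real k * b * \<bar>\<phi>1\<bar>) * \<phi> + 3 * real k * b * \<phi>"
    proof -
      have "0 \<le> 3 * real k * b * \<bar>\<phi>1\<bar>" using b by (intro mult_nonneg_nonneg) auto
      then have "0 \<le> v \<phi>1 + 3 * real k * b * \<bar>\<phi>1\<bar>" using V1 by linarith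
      then have "(v \<phi>1 + 3 * real k * b * \<bar>\<phi>1\<bar>) * 1 \<le> (v \<phi>1 + 3 * real k * b * \<bar>\<phi>1\<bar>) * \<phi>"
        using p1 by (intro mult_left_mono) auto
      then show ?thesis by simp
    qed
    also have "\<dots> = B * \<phi>" by (simp add: B_def algebra_simps)
    finally show ?thesis using lo vb'(2) by linarith
  qed
  define \<alpha> where "\<alpha> = 1 / (2 * real k)"
  have \<alpha>: "0 < \<alpha>" "\<alpha> < 1" using k1 by (auto simp: \<alpha>_def)
  have kpos: "2 * k > 0" using k1 by simp
  have inv_eq: "inverse (r \<phi>) = v \<phi> powr \<alpha>" if "\<phi> \<ge> \<phi>0" for \<phi>
    using pow_powr_inv[of "inverse (r \<phi>)" "2 * k", OF _ kpos] pos[OF that] by (simp add: v_def \<alpha>_def)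
  have vpos: "v \<phi> > 0" if "\<phi> \<ge> \<phi>0" for \<phi> using pos[OF that] by (simp add: v_def)
  have cmp: "A powr \<alpha> * \<phi> powr \<alpha> \<le> inverse (r \<phi>) \<and> inverse (r \<phi>) \<le> B powr \<alpha> * \<phi> powr \<alpha>" if \<phi>: "\<phi> \<ge> T" for \<phi>
  proof -
    have \<phi>0: "\<phi> \<ge> \<phi>0" using \<phi> T by simp
    have "(A * \<phi>) powr \<alpha> \<le> v \<phi> powr \<alpha>" "v \<phi> powr \<alpha> \<le> (B * \<phi>) powr \<alpha>"
      using vAB[OF \<phi>] \<alpha> A B \<phi> T vpos[OF \<phi>0] by (auto intro!: powr_mono2)
    then show ?thesis using inv_eq[OF \<phi>0] A B \<phi> T by (simp add: powr_mult)
  qed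
  have comp: "comparable (\<lambda>\<phi>. inverse (r \<phi>)) (\<lambda>\<phi>. \<bar>\<phi>\<bar> powr (1 / (2 * real k))) at_top"
    unfolding comparable_def
    by (intro exI[of _ "A powr \<alpha>"] exI[of _ "B powr \<alpha>"] conjI eventually_at_top_linorderI[of T])
       (use A B cmp T in \<open>auto simp: \<alpha>_def\<close>)
  have rb: "B powr (- \<alpha>) * \<phi> powr (- \<alpha>) \<le> r \<phi> \<and> r \<phi> \<le> A powr (- \<alpha>) * \<phi> powr (- \<alpha>)" if \<phi>: "\<phi> \<ge> T" for \<phi>
  proof -
    have \<phi>0: "\<phi> \<ge> \<phi>0" using \<phi> T by simp
    have "r \<phi> = inverse (inverse (r \<phi>))" by simp
    also have "\<dots> = inverse (v \<phi> powr \<alpha>)" using inv_eq[OF \<phi>0] by simp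
    finally have re: "r \<phi> = v \<phi> powr (- \<alpha>)" by (simp add: powr_minus)
    have "(B * \<phi>) powr (- \<alpha>) \<le> v \<phi> powr (- \<alpha>)" "v \<phi> powr (- \<alpha>) \<le> (A * \<phi>) powr (- \<alpha>)"
      using vAB[OF \<phi>] \<alpha> A B \<phi> T vpos[OF \<phi>0] by (auto intro!: powr_mono2')
    then show ?thesis unfolding re using A B \<phi> T by (simp add: powr_mult)
  qed
  define C where "C = 3 * b / 2 * A powr (- \<alpha>) / A"
  have C: "C > 0" using b A by (simp add: C_def)
  have r'b: "\<bar>r \<phi> ^ (2 * k + 1) * W \<phi>\<bar> \<le> C * \<phi> powr (- \<alpha> - 1)" if \<phi>: "\<phi> \<ge> T" for \<phi>
  proof -
    have \<phi>0: "\<phi> \<ge> \<phi>0" and \<phi>p: "\<phi> > 0" using \<phi> T by auto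
    have rp: "r \<phi> > 0" using pos[OF \<phi>0] .
    have r2k: "r \<phi> ^ (2 * k) = inverse (v \<phi>)" by (simp add: v_def power_inverse)
    have "r \<phi> ^ (2 * k) \<le> inverse (A * \<phi>)"
      unfolding r2k using vAB[OF \<phi>] A \<phi>p by (intro le_imp_inverse_le) auto
    moreover have "r \<phi> \<le> A powr (- \<alpha>) * \<phi> powr (- \<alpha>)" using rb[OF \<phi>] by simp
    ultimately have f1: "r \<phi> * r \<phi> ^ (2 * k) \<le> (A powr (- \<alpha>) * \<phi> powr (- \<alpha>)) * inverse (A * \<phi>)"
      using rp by (intro mult_mono) auto
    have f2: "\<bar>W \<phi>\<bar> \<le> 3 * b / 2" using Wb[of \<phi>] \<phi> T by auto
    have "(r \<phi> * r \<phi> ^ (2 * k)) * \<bar>W \<phi>\<bar> \<le> ((A powr (- \<alpha>) * \<phi> powr (- \<alpha>)) * inverse (A * \<phi>)) * (3 * b / 2)"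
      by (rule mult_mono[OF f1 f2]) (use A \<phi>p in auto)
    moreover have "\<bar>r \<phi> ^ (2 * k + 1) * W \<phi>\<bar> = (r \<phi> * r \<phi> ^ (2 * k)) * \<bar>W \<phi>\<bar>"
      using rp by (simp add: abs_mult)
    ultimately have "\<bar>r \<phi> ^ (2 * k + 1) * W \<phi>\<bar> \<le> ((A powr (- \<alpha>) * \<phi> powr (- \<alpha>)) * inverse (A * \<phi>)) * (3 * b / 2)"
      by simp
    also have "\<dots> = C * (\<phi> powr (- \<alpha>) / \<phi>)" by (simp add: C_def field_simps)
    also have "\<phi> powr (- \<alpha>) / \<phi> = \<phi> powr (- \<alpha> - 1)" using \<phi>p by (simp add: powr_diff)
    finally show ?thesis .
  qed
  have dims: "lower_box_dim (\<gamma> ` {\<phi>0..}) = 2 / (1 + \<alpha>) \<and> upper_box_dim (\<gamma> ` {\<phi>0..}) = 2 / (1 + \<alpha>)"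
    unfolding \<gamma>_def
  proof (rule geoB[where r'="\<lambda>\<phi>. r \<phi> ^ (2 * k + 1) * W \<phi>", OF L lip[unfolded \<gamma>_def] \<alpha> T(1) _ _ _ C rb])
    show "\<phi>0 \<le> T" using T by simp
    show "0 < B powr - \<alpha>" "0 < A powr - \<alpha>" using A B by auto
    show "\<And>\<phi>. T \<le> \<phi> \<Longrightarrow> (r has_real_derivative r \<phi> ^ (2 * k + 1) * W \<phi>) (at \<phi>)" using derat T by auto
    show "\<And>\<phi>. T \<le> \<phi> \<Longrightarrow> \<bar>r \<phi> ^ (2 * k + 1) * W \<phi>\<bar> \<le> C * \<phi> powr (- \<alpha> - 1)" by (rule r'b)
    show "bounded ((\<lambda>\<phi>. complex_of_real (r \<phi>) * cis \<phi>) ` {\<phi>0..})" using bdd by (simp add: \<gamma>_def)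
  qed
  have "2 / (1 + \<alpha>) = 4 * real k / (2 * real k + 1)" using k1 by (simp add: \<alpha>_def field_simps)
  with comp dims show ?thesis by simp
qed

lemma lborel_cnj: "distr lborel borel cnj = (lborel :: complex measure)"
proof -
  define c where "c j = (if j = \<i> then -1 else (1::real))" for j :: complex
  have T: "(\<lambda>x. 0 + (\<Sum>j\<in>Basis. (c j * (x \<bullet> j)) *\<^sub>R j)) = cnj"
    by (auto simp: Basis_complex_def c_def inner_complex_def complex_eq_iff)
  have c: "\<And>j. j \<in> Basis \<Longrightarrow> c j \<noteq> 0" by (auto simp: c_def)
  have P: "(\<Prod>j\<in>Basis. \<bar>c j\<bar>) = 1" by (auto simp: Basis_complex_def c_def)
  have "lborel = density (distr lborel borel cnj) (\<lambda>_. 1)"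
    using lborel_affine_euclidean[of c 0, OF c] unfolding T P by simp
  then show ?thesis by (simp add: density_1)
qed

lemma dist_cnj2: "dist (cnj x) (cnj y) = dist x y"
  by (simp add: dist_norm flip: complex_cnj_diff)

lemma eps_nbhd_cnj: "eps_nbhd (cnj ` B) e = cnj ` eps_nbhd B e"
proof
  show "eps_nbhd (cnj ` B) e \<subseteq> cnj ` eps_nbhd B e"
  proof
    fix z assume "z \<in> eps_nbhd (cnj ` B) e"
    then obtain x where x: "x \<in> B" "dist (cnj x) z < e" unfolding eps_nbhd_def by auto
    then have "dist x (cnj z) < e" using dist_cnj2[of x "cnj z"] by simp
    then have "cnj z \<in> eps_nbhd B e" using x unfolding eps_nbhd_def by auto
    then show "z \<in> cnj ` eps_nbhd B e" by (metis complex_cnj_cnj image_eqI)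
  qed
  show "cnj ` eps_nbhd B e \<subseteq> eps_nbhd (cnj ` B) e"
  proof
    fix z assume "z \<in> cnj ` eps_nbhd B e"
    then obtain w x where x: "z = cnj w" "x \<in> B" "dist x w < e" unfolding eps_nbhd_def by auto
    then have "dist (cnj x) z < e" using dist_cnj2[of x w] by simp
    then show "z \<in> eps_nbhd (cnj ` B) e" using x unfolding eps_nbhd_def by auto
  qed
qed

lemma measure_cnj_open:
  assumes "open S"
  shows "measure lebesgue (cnj ` S) = measure lebesgue S"
proof -
  have im: "cnj ` S = cnj -` S" by (auto simp: image_iff) (metis complex_cnj_cnj)
  have op: "open (cnj ` S)" unfolding im by (intro open_vimage assms) auto
  have "measure lebesgue (cnj ` S) = measure lborel (cnj ` S)"
    using op by (simp add: measure_completion borel_open)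
  also have "\<dots> = measure (distr lborel borel cnj) S"
    unfolding im using assms by (subst measure_distr) (auto simp: borel_open intro!: borel_measurable_continuous_onI continuous_intros)
  also have "\<dots> = measure lborel S" by (simp add: lborel_cnj)
  also have "\<dots> = measure lebesgue S" using assms by (simp add: measure_completion borel_open)
  finally show ?thesis .
qed

lemma box_dims_cnj:
  "lower_box_dim (cnj ` B) = lower_box_dim B" "upper_box_dim (cnj ` B) = upper_box_dim B"
  unfolding lower_box_dim_def upper_box_dim_def eps_nbhd_cnj
  by (simp_all add: measure_cnj_open eps_nbhd_open)

lemma main_up:
  fixes l :: nat and a :: "nat \<Rightarrow> real" and \<rho> :: "real \<Rightarrow> real" and \<phi>0 :: real
  assumes pos: "\<And>\<phi>. \<phi> \<ge> \<phi>0 \<Longrightarrow> \<rho> \<phi> > 0"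
    and der: "\<And>\<phi>. \<phi> \<ge> \<phi>0 \<Longrightarrow> (\<rho> has_real_derivative
           (- \<rho> \<phi> * (\<Sum>j\<le>l. a j * inverse (\<rho> \<phi>) ^ (2 * j)))) (at \<phi> within {\<phi>0..})"
    and lowb: "\<And>\<phi>. \<phi> \<ge> \<phi>0 \<Longrightarrow> \<rho> \<phi> \<ge> \<delta>" and \<delta>: "\<delta> > 0"
    and unb: "\<And>M. \<exists>\<phi>\<ge>\<phi>0. \<rho> \<phi> > M"
  defines "S \<equiv> (\<lambda>\<phi>. complex_of_real (inverse (\<rho> \<phi>)) * cis \<phi>) ` {\<phi>0..}"
  shows "(a 0 \<noteq> 0 \<longrightarrow>
            comparable \<rho> (\<lambda>\<phi>. exp (- a 0 * \<phi>)) at_top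
            \<and> lower_box_dim S = 1 \<and> upper_box_dim S = 1)
       \<and> (\<forall>k. 1 \<le> k \<and> k \<le> l \<and> (\<forall>j<k. a j = 0) \<and> a k \<noteq> 0 \<longrightarrow>
            comparable \<rho> (\<lambda>\<phi>. \<bar>\<phi>\<bar> powr (1 / (2 * real k))) at_top
            \<and> lower_box_dim S = 4 * real k / (2 * real k + 1)
            \<and> upper_box_dim S = 4 * real k / (2 * real k + 1))"
proof -
  define r where "r \<phi> = inverse (\<rho> \<phi>)" for \<phi>
  have rpos: "\<And>\<phi>. \<phi> \<ge> \<phi>0 \<Longrightarrow> r \<phi> > 0" using pos by (simp add: r_def)
  have Rb: "\<And>\<phi>. \<phi> \<ge> \<phi>0 \<Longrightarrow> r \<phi> \<le> inverse \<delta>"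
    using lowb pos \<delta> by (simp add: r_def le_imp_inverse_le)
  have rder: "(r has_real_derivative r \<phi> * Spol a l (r \<phi>)) (at \<phi> within {\<phi>0..})" if \<phi>: "\<phi> \<ge> \<phi>0" for \<phi>
  proof -
    have ne: "\<rho> \<phi> \<noteq> 0" using pos[OF \<phi>] by simp
    note d = DERIV_inverse_fun[OF der[OF \<phi>] ne]
    have eq: "- ((- \<rho> \<phi> * (\<Sum>j\<le>l. a j * inverse (\<rho> \<phi>) ^ (2 * j))) * inverse (\<rho> \<phi> ^ Suc (Suc 0)))
        = inverse (\<rho> \<phi>) * Spol a l (inverse (\<rho> \<phi>))"
      unfolding Spol_def using ne by (simp add: field_simps power2_eq_square)
    show ?thesis unfolding r_def[abs_def] by (rule DERIV_cong[OF d eq])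
  qed
  have small: "\<exists>\<phi>\<ge>\<phi>0. r \<phi> < e" if e: "e > 0" for e
  proof -
    obtain \<phi> where \<phi>: "\<phi> \<ge> \<phi>0" "\<rho> \<phi> > inverse e" using unb by blast
    then have "inverse (\<rho> \<phi>) < inverse (inverse e)" using e by (intro less_imp_inverse_less) auto
    then show ?thesis using \<phi> e by (auto simp: r_def)
  qed
  have Seq: "S = (\<lambda>\<phi>. complex_of_real (r \<phi>) * cis \<phi>) ` {\<phi>0..}" by (simp add: S_def r_def)
  have rho: "(\<lambda>\<phi>. inverse (r \<phi>)) = \<rho>" by (simp add: r_def)
  show ?thesis
  proof (intro conjI impI allI)
    assume a0: "a 0 \<noteq> 0"
    have "comparable (\<lambda>\<phi>. inverse (r \<phi>)) (\<lambda>\<phi>. exp (- a 0 * \<phi>)) at_top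
      \<and> lower_box_dim ((\<lambda>\<phi>. complex_of_real (r \<phi>) * cis \<phi>) ` {\<phi>0..}) = 1
      \<and> upper_box_dim ((\<lambda>\<phi>. complex_of_real (r \<phi>) * cis \<phi>) ` {\<phi>0..}) = 1"
      by (rule core_k0[OF a0 rpos Rb rder small])
    then show "comparable \<rho> (\<lambda>\<phi>. exp (- a 0 * \<phi>)) at_top" "lower_box_dim S = 1" "upper_box_dim S = 1"
      unfolding Seq rho by auto
  next
    fix k assume k: "1 \<le> k \<and> k \<le> l \<and> (\<forall>j<k. a j = 0) \<and> a k \<noteq> 0"
    have "comparable (\<lambda>\<phi>. inverse (r \<phi>)) (\<lambda>\<phi>. \<bar>\<phi>\<bar> powr (1 / (2 * real k))) at_top
      \<and> lower_box_dim ((\<lambda>\<phi>. complex_of_real (r \<phi>) * cis \<phi>) ` {\<phi>0..}) = 4 * real k / (2 * real k + 1)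
      \<and> upper_box_dim ((\<lambda>\<phi>. complex_of_real (r \<phi>) * cis \<phi>) ` {\<phi>0..}) = 4 * real k / (2 * real k + 1)"
      using k by (intro core_kpos[OF _ _ _ _ rpos Rb rder small]) auto
    then show "comparable \<rho> (\<lambda>\<phi>. \<bar>\<phi>\<bar> powr (1 / (2 * real k))) at_top"
      "lower_box_dim S = 4 * real k / (2 * real k + 1)" "upper_box_dim S = 4 * real k / (2 * real k + 1)"
      unfolding Seq rho by auto
  qed
qed

lemma comparable_mirror:
  "comparable (\<lambda>\<psi>. F (- \<psi>)) (\<lambda>\<psi>. G (- \<psi>)) at_top \<Longrightarrow> comparable F G at_bot"
  by (simp add: comparable_def at_bot_mirror eventually_filtermap)

lemma inversion_polar: "r > 0 \<Longrightarrow> inversion (complex_of_real r * cis \<phi>) = complex_of_real (inverse r) * cis \<phi>"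
  by (simp add: inversion_def norm_mult power2_eq_square field_simps)

theorem theorem4p1:
  fixes l :: nat and a :: "nat \<Rightarrow> real" and \<rho> :: "real \<Rightarrow> real"
    and \<phi>0 :: real and up :: bool
  defines "I \<equiv> (if up then {\<phi>0..} else {..\<phi>0})"
  defines "\<Gamma> \<equiv> (\<lambda>\<phi>. complex_of_real (\<rho> \<phi>) * cis \<phi>) ` I"
  assumes "l \<ge> 1" and "a l = 1"
    and "\<forall>\<phi>\<in>I. \<rho> \<phi> > 0"
    and "\<forall>\<phi>\<in>I. (\<rho> has_real_derivative
           (- \<rho> \<phi> * (\<Sum>j\<le>l. a j * inverse (\<rho> \<phi>) ^ (2 * j)))) (at \<phi> within I)"
    and "\<not> bounded \<Gamma>" and "0 \<notin> closure \<Gamma>"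
  shows "(a 0 \<noteq> 0 \<longrightarrow>
            comparable \<rho> (\<lambda>\<phi>. exp (- a 0 * \<phi>)) (if up then at_top else at_bot)
            \<and> lower_box_dim (inversion ` \<Gamma>) = 1 \<and> upper_box_dim (inversion ` \<Gamma>) = 1)
       \<and> (\<forall>k. 1 \<le> k \<and> k \<le> l \<and> (\<forall>j<k. a j = 0) \<and> a k \<noteq> 0 \<longrightarrow>
            comparable \<rho> (\<lambda>\<phi>. \<bar>\<phi>\<bar> powr (1 / (2 * real k))) (if up then at_top else at_bot)
            \<and> lower_box_dim (inversion ` \<Gamma>) = 4 * real k / (2 * real k + 1)
            \<and> upper_box_dim (inversion ` \<Gamma>) = 4 * real k / (2 * real k + 1))"
proof -
  note pos = assms(5) and der = assms(6) and unbG = assms(7) and clG = assms(8)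
  have normG: "norm (complex_of_real (\<rho> \<phi>) * cis \<phi>) = \<rho> \<phi>" if "\<phi> \<in> I" for \<phi>
    using bspec[OF pos that] by (simp add: norm_mult)
  obtain \<delta> where \<delta>: "\<delta> > 0" and lowb: "\<And>\<phi>. \<phi> \<in> I \<Longrightarrow> \<rho> \<phi> \<ge> \<delta>"
  proof -
    have "\<exists>e>0. \<forall>y\<in>\<Gamma>. e \<le> dist y 0"
    proof (rule ccontr)
      assume "\<not> (\<exists>e>0. \<forall>y\<in>\<Gamma>. e \<le> dist y 0)"
      then have "\<forall>e>0. \<exists>y\<in>\<Gamma>. dist y 0 < e" by (meson not_le)
      then have "0 \<in> closure \<Gamma>" by (simp add: closure_approachable)
      then show False using clG by simp
    qed
    then obtain e where e: "e > 0" "\<And>y. y \<in> \<Gamma> \<Longrightarrow> e \<le> dist y 0" by blast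
    have "\<rho> \<phi> \<ge> e" if "\<phi> \<in> I" for \<phi>
      using e(2)[of "complex_of_real (\<rho> \<phi>) * cis \<phi>"] normG[OF that] that by (auto simp: \<Gamma>_def)
    then show ?thesis using that e(1) by blast
  qed
  have unb: "\<exists>\<phi>\<in>I. \<rho> \<phi> > M" for M
  proof (rule ccontr)
    assume "\<not> (\<exists>\<phi>\<in>I. \<rho> \<phi> > M)"
    then have "\<forall>z\<in>\<Gamma>. norm z \<le> M" using normG by (auto simp: \<Gamma>_def not_less)
    then show False using unbG by (auto simp: bounded_iff)
  qed
  have invG: "inversion ` \<Gamma> = (\<lambda>\<phi>. complex_of_real (inverse (\<rho> \<phi>)) * cis \<phi>) ` I"
    unfolding \<Gamma>_def image_image using pos by (intro image_cong refl inversion_polar) auto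
  show ?thesis
  proof (cases up)
    case True
    then have I: "I = {\<phi>0..}" by (simp add: I_def)
    have "(a 0 \<noteq> 0 \<longrightarrow>
            comparable \<rho> (\<lambda>\<phi>. exp (- a 0 * \<phi>)) at_top
            \<and> lower_box_dim ((\<lambda>\<phi>. complex_of_real (inverse (\<rho> \<phi>)) * cis \<phi>) ` {\<phi>0..}) = 1
            \<and> upper_box_dim ((\<lambda>\<phi>. complex_of_real (inverse (\<rho> \<phi>)) * cis \<phi>) ` {\<phi>0..}) = 1)
       \<and> (\<forall>k. 1 \<le> k \<and> k \<le> l \<and> (\<forall>j<k. a j = 0) \<and> a k \<noteq> 0 \<longrightarrow>
            comparable \<rho> (\<lambda>\<phi>. \<bar>\<phi>\<bar> powr (1 / (2 * real k))) at_top
            \<and> lower_box_dim ((\<lambda>\<phi>. complex_of_real (inverse (\<rho> \<phi>)) * cis \<phi>) ` {\<phi>0..}) = 4 * real k / (2 * real k + 1)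
            \<and> upper_box_dim ((\<lambda>\<phi>. complex_of_real (inverse (\<rho> \<phi>)) * cis \<phi>) ` {\<phi>0..}) = 4 * real k / (2 * real k + 1))"
      by (rule main_up[OF _ _ _ \<delta>]) (use pos der lowb unb in \<open>auto simp: I Bex_def\<close>)
    then show ?thesis using True unfolding invG I by simp
  next
    case False
    then have I: "I = {..\<phi>0}" by (simp add: I_def)
    define \<rho>' where "\<rho>' \<psi> = \<rho> (- \<psi>)" for \<psi>
    define a' where "a' j = - a j" for j
    have im: "uminus ` {- \<phi>0..} = {..\<phi>0}" by (auto simp: image_iff intro: exI[of _ "- x" for x])
    have der': "(\<rho>' has_real_derivative
           (- \<rho>' \<psi> * (\<Sum>j\<le>l. a' j * inverse (\<rho>' \<psi>) ^ (2 * j)))) (at \<psi> within {- \<phi>0..})"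
      if \<psi>: "\<psi> \<ge> - \<phi>0" for \<psi>
    proof -
      have d: "(\<rho> has_real_derivative (- \<rho> (- \<psi>) * (\<Sum>j\<le>l. a j * inverse (\<rho> (- \<psi>)) ^ (2 * j))))
          (at (- \<psi>) within uminus ` {- \<phi>0..})"
        using der \<psi> unfolding im I by auto
      have "(\<rho> \<circ> uminus has_real_derivative (- \<rho> (- \<psi>) * (\<Sum>j\<le>l. a j * inverse (\<rho> (- \<psi>)) ^ (2 * j))) * (- 1))
          (at \<psi> within {- \<phi>0..})"
        by (rule DERIV_image_chain[OF d]) (auto intro!: derivative_eq_intros)
      moreover have "\<rho> \<circ> uminus = \<rho>'" by (auto simp: \<rho>'_def)
      moreover have "(- \<rho> (- \<psi>) * (\<Sum>j\<le>l. a j * inverse (\<rho> (- \<psi>)) ^ (2 * j))) * (- 1)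
          = - \<rho>' \<psi> * (\<Sum>j\<le>l. a' j * inverse (\<rho>' \<psi>) ^ (2 * j))"
        by (simp add: \<rho>'_def a'_def sum_negf)
      ultimately show ?thesis by simp
    qed
    define S' where "S' = (\<lambda>\<psi>. complex_of_real (inverse (\<rho>' \<psi>)) * cis \<psi>) ` {- \<phi>0..}"
    have R: "(a' 0 \<noteq> 0 \<longrightarrow>
            comparable \<rho>' (\<lambda>\<phi>. exp (- a' 0 * \<phi>)) at_top
            \<and> lower_box_dim S' = 1 \<and> upper_box_dim S' = 1)
       \<and> (\<forall>k. 1 \<le> k \<and> k \<le> l \<and> (\<forall>j<k. a' j = 0) \<and> a' k \<noteq> 0 \<longrightarrow>
            comparable \<rho>' (\<lambda>\<phi>. \<bar>\<phi>\<bar> powr (1 / (2 * real k))) at_top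
            \<and> lower_box_dim S' = 4 * real k / (2 * real k + 1)
            \<and> upper_box_dim S' = 4 * real k / (2 * real k + 1))"
      unfolding S'_def
    proof (rule main_up[OF _ der' _ \<delta>])
      show "\<And>\<psi>. - \<phi>0 \<le> \<psi> \<Longrightarrow> 0 < \<rho>' \<psi>" using pos by (auto simp: I \<rho>'_def)
      show "\<And>\<psi>. - \<phi>0 \<le> \<psi> \<Longrightarrow> \<delta> \<le> \<rho>' \<psi>" using lowb by (auto simp: I \<rho>'_def)
      show "\<exists>\<psi>\<ge>- \<phi>0. M < \<rho>' \<psi>" for M
      proof -
        obtain \<phi> where "\<phi> \<in> I" "\<rho> \<phi> > M" using unb by blast
        then show ?thesis unfolding I \<rho>'_def by (intro exI[of _ "- \<phi>"]) auto
      qed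
    qed
    have invS: "inversion ` \<Gamma> = cnj ` S'"
    proof -
      have "inversion ` \<Gamma> = (\<lambda>\<phi>. complex_of_real (inverse (\<rho> \<phi>)) * cis \<phi>) ` uminus ` {- \<phi>0..}"
        unfolding invG I im ..
      also have "\<dots> = cnj ` S'" unfolding S'_def image_image
        by (intro image_cong refl) (simp add: \<rho>'_def cis_cnj)
      finally show ?thesis .
    qed
    have dS: "lower_box_dim (inversion ` \<Gamma>) = lower_box_dim S'" "upper_box_dim (inversion ` \<Gamma>) = upper_box_dim S'"
      unfolding invS by (rule box_dims_cnj)+
    have rr: "\<rho>' = (\<lambda>\<psi>. \<rho> (- \<psi>))" by (simp add: \<rho>'_def[abs_def])
    show ?thesis
    proof (intro conjI impI allI)
      assume a0: "a 0 \<noteq> 0"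
      then have "a' 0 \<noteq> 0" by (simp add: a'_def)
      then have c: "comparable \<rho>' (\<lambda>\<phi>. exp (- a' 0 * \<phi>)) at_top" and d: "lower_box_dim S' = 1" "upper_box_dim S' = 1"
        using R by auto
      have "comparable (\<lambda>\<psi>. \<rho> (- \<psi>)) (\<lambda>\<psi>. exp (- a 0 * (- \<psi>))) at_top"
        using c unfolding rr by (simp add: a'_def)
      then show "comparable \<rho> (\<lambda>\<phi>. exp (- a 0 * \<phi>)) (if up then at_top else at_bot)"
        using False by (simp add: comparable_mirror)
      show "lower_box_dim (inversion ` \<Gamma>) = 1" "upper_box_dim (inversion ` \<Gamma>) = 1" using d dS by simp_all
    next
      fix k assume k: "1 \<le> k \<and> k \<le> l \<and> (\<forall>j<k. a j = 0) \<and> a k \<noteq> 0"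
      then have "1 \<le> k \<and> k \<le> l \<and> (\<forall>j<k. a' j = 0) \<and> a' k \<noteq> 0" by (simp add: a'_def)
      then have c: "comparable \<rho>' (\<lambda>\<phi>. \<bar>\<phi>\<bar> powr (1 / (2 * real k))) at_top"
        and d: "lower_box_dim S' = 4 * real k / (2 * real k + 1)" "upper_box_dim S' = 4 * real k / (2 * real k + 1)"
        using R by auto
      have "comparable (\<lambda>\<psi>. \<rho> (- \<psi>)) (\<lambda>\<psi>. \<bar>- \<psi>\<bar> powr (1 / (2 * real k))) at_top"
        using c unfolding rr by simp
      then show "comparable \<rho> (\<lambda>\<phi>. \<bar>\<phi>\<bar> powr (1 / (2 * real k))) (if up then at_top else at_bot)"
        using False by (simp add: comparable_mirror)
      show "lower_box_dim (inversion ` \<Gamma>) = 4 * real k / (2 * real k + 1)"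
        "upper_box_dim (inversion ` \<Gamma>) = 4 * real k / (2 * real k + 1)" using d dS by simp_all
    qed
  qed
qed

end
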